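(* Let $G$ be a looped simple graph and $M$ a transverse matroid of $G$. Then every matroid minor of $M$ is isomorphic to a transverse matroid of some vertex-minor of $G$.
   Context: A looped simple graph is a finite graph in which each vertex carries at most one loop and no two distinct vertices are joined by more than one edge; "neighbors" are distinct vertices joined by a non-loop edge. $A(G)$ is the $V(G)\times V(G)$ matrix over $GF(2)$ with diagonal entry $1$ exactly at looped vertices and off-diagonal entry $1$ exactly for adjacent pairs. $IAS(G)=(I\mid A(G)\mid A(G)+I)$ over $GF(2)$, rows indexed by $V(G)$; the $v$-columns of the three blocks are labelled $\phi_G(v),\chi_G(v),\psi_G(v)$. $M[IAS(G)]$ is the binary column matroid of $IAS(G)$ on $W(G)=\{\phi_G(v),\chi_G(v),\psi_G(v):v\in V(G)\}$. A transversal contains exactly one element of each vertex triple $\{\phi_G(v),\chi_G(v),\psi_G(v)\}$; a transverse matroid of $G$ is the restriction of $M[IAS(G)]$ to a transversal. $G_\ell^v$ complements the loop status of $v$; $G_s^v$ complements the adjacency status of every pair of distinct neighbors of $v$; $G_{ns}^v$ does this and also complements the loop status of every neighbor of $v$. A vertex-minor of $G$ is a graph obtained from $G$ by a finite sequence of these operations and vertex deletions. *)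

theory Defs
  imports Main "HOL-Library.Z2"
begin

text \<open>A looped simple graph is a pair (V, A) where V is the finite vertex set and
  A x y says that x and y are adjacent (x \<noteq> y) or, for x = y, that x carries a loop.\<close>

type_synonym 'a lgraph = "'a set \<times> ('a \<Rightarrow> 'a \<Rightarrow> bool)"

definition verts :: "'a lgraph \<Rightarrow> 'a set" where "verts G = fst G"
definition rel :: "'a lgraph \<Rightarrow> 'a \<Rightarrow> 'a \<Rightarrow> bool" where "rel G = snd G"

definition looped_simple_graph :: "'a lgraph \<Rightarrow> bool" where
  "looped_simple_graph G \<longleftrightarrow> finite (verts G)
     \<and> (\<forall>x y. rel G x y \<longrightarrow> x \<in> verts G \<and> y \<in> verts G)
     \<and> (\<forall>x y. rel G x y = rel G y x)"

definition neighbor :: "'a lgraph \<Rightarrow> 'a \<Rightarrow> 'a \<Rightarrow> bool" where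
  "neighbor G v x \<longleftrightarrow> x \<noteq> v \<and> rel G v x"

definition adjmat :: "'a lgraph \<Rightarrow> 'a \<Rightarrow> 'a \<Rightarrow> bit" where
  "adjmat G x y = (if rel G x y then 1 else 0)"

datatype 'a welt = Phi 'a | Chi 'a | Psi 'a

definition W :: "'a lgraph \<Rightarrow> 'a welt set" where
  "W G = Phi ` verts G \<union> Chi ` verts G \<union> Psi ` verts G"

text \<open>Columns of IAS(G) = (I | A(G) | A(G)+I), rows indexed by V(G).\<close>
fun col :: "'a lgraph \<Rightarrow> 'a welt \<Rightarrow> 'a \<Rightarrow> bit" where
  "col G (Phi v) w = (if w = v then 1 else 0)"
| "col G (Chi v) w = adjmat G w v"
| "col G (Psi v) w = adjmat G w v + (if w = v then 1 else 0)"

type_synonym 'e matroid = "'e set \<times> ('e set \<Rightarrow> bool)"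

definition ground :: "'e matroid \<Rightarrow> 'e set" where "ground M = fst M"
definition indep :: "'e matroid \<Rightarrow> 'e set \<Rightarrow> bool" where "indep M = snd M"

definition IAS_matroid :: "'a lgraph \<Rightarrow> 'a welt matroid" where
  "IAS_matroid G = (W G, \<lambda>I. I \<subseteq> W G \<and>
     (\<forall>c :: 'a welt \<Rightarrow> bit. (\<forall>w \<in> verts G. (\<Sum>e\<in>I. c e * col G e w) = 0)
        \<longrightarrow> (\<forall>e\<in>I. c e = 0)))"

definition transversal :: "'a lgraph \<Rightarrow> 'a welt set \<Rightarrow> bool" where
  "transversal G T \<longleftrightarrow> T \<subseteq> W G \<and>
     (\<forall>v \<in> verts G. card (T \<inter> {Phi v, Chi v, Psi v}) = 1)"

definition restrict_matroid :: "'e matroid \<Rightarrow> 'e set \<Rightarrow> 'e matroid" where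
  "restrict_matroid M X = (X, \<lambda>I. I \<subseteq> X \<and> indep M I)"

definition transverse_matroid :: "'a lgraph \<Rightarrow> 'a welt set \<Rightarrow> 'a welt matroid" where
  "transverse_matroid G T = restrict_matroid (IAS_matroid G) T"

definition delete_matroid :: "'e matroid \<Rightarrow> 'e set \<Rightarrow> 'e matroid" where
  "delete_matroid M D = restrict_matroid M (ground M - D)"

definition basis_of :: "'e matroid \<Rightarrow> 'e set \<Rightarrow> 'e set \<Rightarrow> bool" where
  "basis_of M X B \<longleftrightarrow> B \<subseteq> X \<and> indep M B \<and> (\<forall>B'. B \<subset> B' \<and> B' \<subseteq> X \<longrightarrow> \<not> indep M B')"

definition contract_matroid :: "'e matroid \<Rightarrow> 'e set \<Rightarrow> 'e matroid" where
  "contract_matroid M C = (ground M - C, \<lambda>J. J \<subseteq> ground M - C \<and>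
      (\<exists>B. basis_of M (C \<inter> ground M) B \<and> indep M (J \<union> B)))"

inductive matroid_minor :: "'e matroid \<Rightarrow> 'e matroid \<Rightarrow> bool" where
  refl: "matroid_minor M M"
| del: "matroid_minor M N \<Longrightarrow> D \<subseteq> ground N \<Longrightarrow> matroid_minor M (delete_matroid N D)"
| con: "matroid_minor M N \<Longrightarrow> C \<subseteq> ground N \<Longrightarrow> matroid_minor M (contract_matroid N C)"

definition matroid_iso :: "'e matroid \<Rightarrow> 'f matroid \<Rightarrow> bool" where
  "matroid_iso M N \<longleftrightarrow> (\<exists>f. bij_betw f (ground M) (ground N) \<and>
      (\<forall>I \<subseteq> ground M. indep M I \<longleftrightarrow> indep N (f ` I)))"

definition loop_compl :: "'a \<Rightarrow> 'a lgraph \<Rightarrow> 'a lgraph" where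
  "loop_compl v G = (verts G, \<lambda>x y. if x = v \<and> y = v then \<not> rel G x y else rel G x y)"

definition s_compl :: "'a \<Rightarrow> 'a lgraph \<Rightarrow> 'a lgraph" where
  "s_compl v G = (verts G, \<lambda>x y.
     if x \<noteq> y \<and> neighbor G v x \<and> neighbor G v y then \<not> rel G x y else rel G x y)"

definition ns_compl :: "'a \<Rightarrow> 'a lgraph \<Rightarrow> 'a lgraph" where
  "ns_compl v G = (verts G, \<lambda>x y.
     if (x \<noteq> y \<and> neighbor G v x \<and> neighbor G v y) \<or> (x = y \<and> neighbor G v x)
     then \<not> rel G x y else rel G x y)"

definition delete_vertex :: "'a \<Rightarrow> 'a lgraph \<Rightarrow> 'a lgraph" where
  "delete_vertex v G = (verts G - {v}, \<lambda>x y. x \<noteq> v \<and> y \<noteq> v \<and> rel G x y)"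

inductive vertex_minor :: "'a lgraph \<Rightarrow> 'a lgraph \<Rightarrow> bool" where
  refl: "vertex_minor G G"
| loop: "vertex_minor G H \<Longrightarrow> v \<in> verts H \<Longrightarrow> vertex_minor G (loop_compl v H)"
| s: "vertex_minor G H \<Longrightarrow> v \<in> verts H \<Longrightarrow> vertex_minor G (s_compl v H)"
| ns: "vertex_minor G H \<Longrightarrow> v \<in> verts H \<Longrightarrow> vertex_minor G (ns_compl v H)"
| del: "vertex_minor G H \<Longrightarrow> v \<in> verts H \<Longrightarrow> vertex_minor G (delete_vertex v H)"

end

theory Submission
  imports Defs
begin


declare add_bit_eq_xor[simp del] mult_bit_eq_and[simp del]

lemma bit_add_self[simp]: "(x::bit) + x = 0" by (cases x) simp_all
lemma bit_add_self2[simp]: "(x::bit) + (x + y) = y" by (cases x; cases y) simp_all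
lemma bit_eq_iff_add: "((x::bit) + y = 0) = (x = y)" by (cases x; cases y) simp_all

definition lin :: "('e \<Rightarrow> 'a \<Rightarrow> bit) \<Rightarrow> 'e set \<Rightarrow> bool" where
  "lin v I \<longleftrightarrow> (\<forall>c. (\<forall>w. (\<Sum>e\<in>I. c e * v e w) = 0) \<longrightarrow> (\<forall>e\<in>I. c e = 0))"

definition vm :: "'e set \<Rightarrow> ('e \<Rightarrow> 'a \<Rightarrow> bit) \<Rightarrow> 'e matroid" where
  "vm X v = (X, \<lambda>I. I \<subseteq> X \<and> lin v I)"

definition imod :: "('e \<Rightarrow> 'a \<Rightarrow> bit) \<Rightarrow> 'e set \<Rightarrow> 'e set \<Rightarrow> bool" where
  "imod v C J \<longleftrightarrow> (\<forall>c. (\<forall>w. (\<Sum>e\<in>J \<union> C. c e * v e w) = 0) \<longrightarrow> (\<forall>e\<in>J. c e = 0))"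

lemma ground_vm[simp]: "ground (vm X v) = X" by (simp add: ground_def vm_def)
lemma indep_vm[simp]: "indep (vm X v) I = (I \<subseteq> X \<and> lin v I)" by (simp add: indep_def vm_def)

lemma lin_empty[simp]: "lin v {}" by (simp add: lin_def)

lemma basis_exists:
  assumes "finite C" "C \<subseteq> X"
  shows "\<exists>B. basis_of (vm X v) C B"
proof -
  let ?F = "{B. B \<subseteq> C \<and> lin v B}"
  have sub: "?F \<subseteq> Pow C" by blast
  have "finite ?F" using finite_subset[OF sub] assms(1) by simp
  moreover have "{} \<in> ?F" by simp
  ultimately have "?F \<noteq> {}" by blast
  then obtain m where m: "m \<in> ?F" "\<forall>b\<in>?F. m \<le> b \<longrightarrow> m = b"
    using finite_has_maximal[OF \<open>finite ?F\<close>] by blast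
  have "basis_of (vm X v) C m"
    unfolding basis_of_def indep_vm
  proof (intro conjI allI impI)
    show "m \<subseteq> C" using m(1) by simp
    show "m \<subseteq> X" using m(1) assms(2) by blast
    show "lin v m" using m(1) by simp
    fix B' assume "m \<subset> B' \<and> B' \<subseteq> C"
    then show "\<not> (B' \<subseteq> X \<and> lin v B')" using m(2) by blast
  qed
  then show ?thesis by blast
qed

lemma basis_span:
  assumes b: "basis_of (vm X v) C B" and x: "x \<in> C" and fin: "finite C" and CX: "C \<subseteq> X"
  shows "\<exists>d. \<forall>w. v x w = (\<Sum>e\<in>B. d e * v e w)"
proof -
  have BC: "B \<subseteq> C" and linB: "lin v B" and mx: "\<And>B'. B \<subset> B' \<Longrightarrow> B' \<subseteq> C \<Longrightarrow> \<not> (B' \<subseteq> X \<and> lin v B')"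
    using b unfolding basis_of_def by auto
  have finB: "finite B" using BC fin by (auto intro: finite_subset)
  show ?thesis
  proof (cases "x \<in> B")
    case True
    show ?thesis
    proof (rule exI[of _ "\<lambda>e. if e = x then 1 else 0"], intro allI)
      fix w
      have "(\<Sum>e\<in>B. (if e = x then 1 else 0) * v e w) = (\<Sum>e\<in>B. if e = x then v e w else 0)"
        by (rule sum.cong) auto
      also have "\<dots> = v x w" using True finB by simp
      finally show "v x w = (\<Sum>e\<in>B. (if e = x then 1 else 0) * v e w)" by simp
    qed
  next
    case False
    have "B \<subset> insert x B" using False by auto
    moreover have "insert x B \<subseteq> C" using BC x by auto
    ultimately have "\<not> lin v (insert x B)" using mx CX by blast
    then obtain c where Z: "\<forall>w. (\<Sum>e\<in>insert x B. c e * v e w) = 0" and nz: "\<exists>e\<in>insert x B. c e \<noteq> 0"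
      unfolding lin_def by blast
    have Z2: "\<And>w. c x * v x w + (\<Sum>e\<in>B. c e * v e w) = 0"
      using Z False finB by simp
    have cx: "c x = 1"
    proof (rule ccontr)
      assume "c x \<noteq> 1"
      then have "c x = 0" by simp
      then have "\<forall>w. (\<Sum>e\<in>B. c e * v e w) = 0" using Z2 by simp
      then have "\<forall>e\<in>B. c e = 0" using linB unfolding lin_def by blast
      then show False using nz \<open>c x = 0\<close> by auto
    qed
    show ?thesis
    proof (rule exI[of _ c], intro allI)
      fix w show "v x w = (\<Sum>e\<in>B. c e * v e w)" using Z2[of w] cx by (simp add: bit_eq_iff_add)
    qed
  qed
qed

lemma span_sum:
  fixes v :: "'e \<Rightarrow> 'a \<Rightarrow> bit"
  assumes "finite C" "\<forall>x\<in>C. \<exists>d. \<forall>w. v x w = (\<Sum>e\<in>B. d e * v e w)"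
  shows "\<exists>d. \<forall>w. (\<Sum>x\<in>C. c x * v x w) = (\<Sum>e\<in>B. d e * v e w)"
  using assms
proof (induction C rule: finite_induct)
  case empty
  show ?case by (rule exI[of _ "\<lambda>_. 0"]) simp
next
  case (insert x F)
  obtain d1 where d1: "\<forall>w. (\<Sum>x\<in>F. c x * v x w) = (\<Sum>e\<in>B. d1 e * v e w)" using insert by blast
  obtain dx where dx: "\<forall>w. v x w = (\<Sum>e\<in>B. dx e * v e w)" using insert by blast
  show ?case
  proof (rule exI[of _ "\<lambda>e. c x * dx e + d1 e"], intro allI)
    fix w
    have "(\<Sum>x\<in>insert x F. c x * v x w) = c x * v x w + (\<Sum>x\<in>F. c x * v x w)"
      using insert by simp
    also have "\<dots> = c x * (\<Sum>e\<in>B. dx e * v e w) + (\<Sum>e\<in>B. d1 e * v e w)"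
    proof -
      have e1: "(\<Sum>x\<in>F. c x * v x w) = (\<Sum>e\<in>B. d1 e * v e w)" using d1 by blast
      have e2: "v x w = (\<Sum>e\<in>B. dx e * v e w)" using dx by blast
      show ?thesis by (simp only: e1 e2)
    qed
    also have "\<dots> = (\<Sum>e\<in>B. (c x * dx e + d1 e) * v e w)"
      by (simp add: sum_distrib_left sum.distrib algebra_simps)
    finally show "(\<Sum>x\<in>insert x F. c x * v x w) = (\<Sum>e\<in>B. (c x * dx e + d1 e) * v e w)" .
  qed
qed

lemma lin_imod:
  assumes b: "basis_of (vm X v) C B" and CX: "C \<subseteq> X" and fin: "finite X"
    and JC: "J \<inter> C = {}" and JX: "J \<subseteq> X"
  shows "lin v (J \<union> B) \<longleftrightarrow> imod v C J"
proof -
  have BC: "B \<subseteq> C" and linB: "lin v B"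
    using b unfolding basis_of_def by auto
  have finC: "finite C" using CX fin by (auto intro: finite_subset)
  have finB: "finite B" using BC finC by (auto intro: finite_subset)
  have finJ: "finite J" using JX fin by (auto intro: finite_subset)
  have JB: "J \<inter> B = {}" using JC BC by auto
  show ?thesis
  proof
    assume L: "lin v (J \<union> B)"
    show "imod v C J" unfolding imod_def
    proof (intro allI impI)
      fix c assume Z: "\<forall>w. (\<Sum>e\<in>J \<union> C. c e * v e w) = 0"
      have sp: "\<forall>x\<in>C - B. \<exists>d. \<forall>w. v x w = (\<Sum>e\<in>B. d e * v e w)"
        using basis_span[OF b _ finC CX] by blast
      obtain d where D: "\<forall>w. (\<Sum>x\<in>C - B. c x * v x w) = (\<Sum>e\<in>B. d e * v e w)"
        using span_sum[OF _ sp, of c] finC by blast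
      define c' where "c' e = (if e \<in> B then c e + d e else c e)" for e
      have "\<forall>w. (\<Sum>e\<in>J \<union> B. c' e * v e w) = 0"
      proof
        fix w
        have "(\<Sum>e\<in>J \<union> B. c' e * v e w) = (\<Sum>e\<in>J. c' e * v e w) + (\<Sum>e\<in>B. c' e * v e w)"
          using finJ finB JB by (simp add: sum.union_disjoint)
        also have "(\<Sum>e\<in>J. c' e * v e w) = (\<Sum>e\<in>J. c e * v e w)"
          using JB by (intro sum.cong) (auto simp: c'_def)
        also have "(\<Sum>e\<in>B. c' e * v e w) = (\<Sum>e\<in>B. c e * v e w) + (\<Sum>e\<in>B. d e * v e w)"
          by (simp add: c'_def sum.distrib algebra_simps)
        also have "(\<Sum>e\<in>B. d e * v e w) = (\<Sum>x\<in>C - B. c x * v x w)" using D by simp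
        also have "(\<Sum>e\<in>J. c e * v e w) + ((\<Sum>e\<in>B. c e * v e w) + (\<Sum>x\<in>C - B. c x * v x w))
             = (\<Sum>e\<in>J \<union> C. c e * v e w)"
        proof -
          have "(\<Sum>e\<in>B. c e * v e w) + (\<Sum>x\<in>C - B. c x * v x w) = (\<Sum>e\<in>C. c e * v e w)"
            using finC BC by (metis sum.subset_diff add.commute)
          moreover have "(\<Sum>e\<in>J \<union> C. c e * v e w) = (\<Sum>e\<in>J. c e * v e w) + (\<Sum>e\<in>C. c e * v e w)"
            using finJ finC JC by (simp add: sum.union_disjoint)
          ultimately show ?thesis by simp
        qed
        also have "\<dots> = 0" using Z by simp
        finally show "(\<Sum>e\<in>J \<union> B. c' e * v e w) = 0" .
      qed
      then have "\<forall>e\<in>J \<union> B. c' e = 0" using L unfolding lin_def by blast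
      then have c0: "\<forall>e\<in>J \<union> B. c' e = 0" .
      show "\<forall>e\<in>J. c e = 0"
      proof
        fix e assume e: "e \<in> J"
        then have "e \<notin> B" using JB by blast
        then have "c' e = c e" by (simp add: c'_def)
        then show "c e = 0" using c0 e by simp
      qed
    qed
  next
    assume I: "imod v C J"
    show "lin v (J \<union> B)" unfolding lin_def
    proof (intro allI impI)
      fix c assume Z: "\<forall>w. (\<Sum>e\<in>J \<union> B. c e * v e w) = 0"
      define c' where "c' e = (if e \<in> J \<union> B then c e else 0)" for e
      have "\<forall>w. (\<Sum>e\<in>J \<union> C. c' e * v e w) = 0"
      proof
        fix w
        have "(\<Sum>e\<in>J \<union> C. c' e * v e w) = (\<Sum>e\<in>J \<union> B. c' e * v e w)"
          using finJ finC BC by (intro sum.mono_neutral_right) (auto simp: c'_def)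
        also have "\<dots> = (\<Sum>e\<in>J \<union> B. c e * v e w)" by (intro sum.cong) (auto simp: c'_def)
        finally show "(\<Sum>e\<in>J \<union> C. c' e * v e w) = 0" using Z by simp
      qed
      then have "\<forall>e\<in>J. c' e = 0" using I unfolding imod_def by blast
      then have cJ: "\<forall>e\<in>J. c e = 0" unfolding c'_def by auto
      have "\<forall>w. (\<Sum>e\<in>B. c e * v e w) = 0"
      proof
        fix w
        have "(\<Sum>e\<in>J \<union> B. c e * v e w) = (\<Sum>e\<in>J. c e * v e w) + (\<Sum>e\<in>B. c e * v e w)"
          using finJ finB JB by (simp add: sum.union_disjoint)
        moreover have "(\<Sum>e\<in>J. c e * v e w) = 0" using cJ by simp
        ultimately show "(\<Sum>e\<in>B. c e * v e w) = 0" using Z by simp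
      qed
      then have "\<forall>e\<in>B. c e = 0" using linB unfolding lin_def by blast
      then show "\<forall>e\<in>J \<union> B. c e = 0" using cJ by blast
    qed
  qed
qed

lemma contract_vm:
  assumes fin: "finite X" and CX: "C \<subseteq> X"
  shows "contract_matroid (vm X v) C = (X - C, \<lambda>J. J \<subseteq> X - C \<and> imod v C J)"
proof -
  obtain B0 where B0: "basis_of (vm X v) C B0"
    using basis_exists[OF _ CX] fin CX by (meson finite_subset)
  have CX': "C \<inter> X = C" using CX by auto
  have eq: "(J \<subseteq> X - C \<and> (\<exists>B. basis_of (vm X v) C B \<and> (J \<union> B \<subseteq> X \<and> lin v (J \<union> B))))
      = (J \<subseteq> X - C \<and> imod v C J)" for J
  proof (cases "J \<subseteq> X - C")
    case that: True
    have "(\<exists>B. basis_of (vm X v) C B \<and> J \<union> B \<subseteq> X \<and> lin v (J \<union> B)) \<longleftrightarrow> imod v C J"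
    proof
      assume "\<exists>B. basis_of (vm X v) C B \<and> J \<union> B \<subseteq> X \<and> lin v (J \<union> B)"
      then obtain B where "basis_of (vm X v) C B" "lin v (J \<union> B)" by blast
      then show "imod v C J" using lin_imod[of X v C B J] CX fin that by auto
    next
      assume "imod v C J"
      then have "lin v (J \<union> B0)" using lin_imod[OF B0 CX fin] that by auto
      moreover have "B0 \<subseteq> C" using B0 unfolding basis_of_def by auto
      ultimately show "\<exists>B. basis_of (vm X v) C B \<and> J \<union> B \<subseteq> X \<and> lin v (J \<union> B)"
        using B0 that CX by blast
    qed
    then show ?thesis using that by blast
  qed simp
  show ?thesis
    unfolding contract_matroid_def ground_vm indep_vm CX' by (simp only: eq)
qed




lemma vm_cong: "(\<And>e. e \<in> X \<Longrightarrow> v e = v' e) \<Longrightarrow> vm X v = vm X v'"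
proof -
  assume h: "\<And>e. e \<in> X \<Longrightarrow> v e = v' e"
  have "lin v I = lin v' I" if "I \<subseteq> X" for I
  proof -
    have "(\<Sum>e\<in>I. c e * v e w) = (\<Sum>e\<in>I. c e * v' e w)" for c w
      using that h by (intro sum.cong) auto
    then show ?thesis unfolding lin_def by simp
  qed
  then show ?thesis unfolding vm_def by (auto intro!: ext)
qed

lemma imod_insert:
  fixes v :: "'e \<Rightarrow> 'a \<Rightarrow> bit"
  assumes pk: "v c k = 1" and cJ: "c \<notin> J" and cC: "c \<notin> C'" and fJ: "finite J" and fC: "finite C'"
  shows "imod v (insert c C') J = imod (\<lambda>e w. v e w + v e k * v c w) C' J"
proof -
  define S where "S d w = (\<Sum>e\<in>J \<union> C'. d e * v e w)" for d w
  have cU: "c \<notin> J \<union> C'" using cJ cC by blast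
  have fU: "finite (J \<union> C')" using fJ fC by simp
  have s1: "(\<Sum>e\<in>J \<union> insert c C'. d e * v e w) = d c * v c w + S d w" for d w
  proof -
    have "J \<union> insert c C' = insert c (J \<union> C')" by blast
    then show ?thesis using cU fU by (simp add: S_def)
  qed
  have s2: "(\<Sum>e\<in>J \<union> C'. d e * (v e w + v e k * v c w)) = S d w + S d k * v c w" for d w
    unfolding S_def by (simp add: distrib_left sum.distrib sum_distrib_right mult.assoc)
  have sS: "S (d(c := t)) w = S d w" for d t w
    unfolding S_def using cU by (intro sum.cong) auto
  show ?thesis
  proof
    assume I: "imod v (insert c C') J"
    show "imod (\<lambda>e w. v e w + v e k * v c w) C' J" unfolding imod_def
    proof (intro allI impI)
      fix d assume Z: "\<forall>w. (\<Sum>e\<in>J \<union> C'. d e * (v e w + v e k * v c w)) = 0"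
      have "\<forall>w. (\<Sum>e\<in>J \<union> insert c C'. (d(c := S d k)) e * v e w) = 0"
      proof
        fix w
        have "(\<Sum>e\<in>J \<union> insert c C'. (d(c := S d k)) e * v e w) = S d k * v c w + S d w"
          using s1[of "d(c := S d k)" w] sS by simp
        also have "\<dots> = 0" using Z s2 by (simp add: add.commute)
        finally show "(\<Sum>e\<in>J \<union> insert c C'. (d(c := S d k)) e * v e w) = 0" .
      qed
      then have D0: "\<forall>e\<in>J. (d(c := S d k)) e = 0" using I unfolding imod_def by blast
      show "\<forall>e\<in>J. d e = 0"
      proof
        fix e assume e: "e \<in> J"
        then have "e \<noteq> c" using cJ by blast
        then have "(d(c := S d k)) e = d e" by simp
        then show "d e = 0" using D0 e by simp
      qed
    qed
  next
    assume I: "imod (\<lambda>e w. v e w + v e k * v c w) C' J"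
    show "imod v (insert c C') J" unfolding imod_def
    proof (intro allI impI)
      fix d assume Z: "\<forall>w. (\<Sum>e\<in>J \<union> insert c C'. d e * v e w) = 0"
      have Z': "d c * v c w + S d w = 0" for w using Z s1 by simp
      have dc: "d c = S d k" using Z'[of k] pk by (simp add: bit_eq_iff_add)
      have "\<forall>w. (\<Sum>e\<in>J \<union> C'. d e * (v e w + v e k * v c w)) = 0"
        using Z' dc s2 by (simp add: add.commute)
      then show "\<forall>e\<in>J. d e = 0" using I unfolding imod_def by blast
    qed
  qed
qed

lemma imod_insert0:
  fixes v :: "'e \<Rightarrow> 'a \<Rightarrow> bit"
  assumes p0: "\<forall>w. v c w = 0" and cJ: "c \<notin> J" and cC: "c \<notin> C'" and fJ: "finite J" and fC: "finite C'"
  shows "imod v (insert c C') J = imod v C' J"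
proof -
  have cU: "c \<notin> J \<union> C'" using cJ cC by blast
  have fU: "finite (J \<union> C')" using fJ fC by simp
  have s1: "(\<Sum>e\<in>J \<union> insert c C'. d e * v e w) = (\<Sum>e\<in>J \<union> C'. d e * v e w)" for d w
  proof -
    have "J \<union> insert c C' = insert c (J \<union> C')" by blast
    then show ?thesis using cU fU p0 by simp
  qed
  show ?thesis unfolding imod_def s1
  proof (intro iffI allI impI)
    fix d assume I: "\<forall>d. (\<forall>w. (\<Sum>e\<in>J \<union> C'. d e * v e w) = 0) \<longrightarrow> (\<forall>e\<in>J. d e = 0)"
      and Z: "\<forall>w. (\<Sum>e\<in>J \<union> C'. d e * v e w) = 0"
    show "\<forall>e\<in>J. d e = 0" using I Z by blast
  next
    fix d assume I: "\<forall>d. (\<forall>w. (\<Sum>e\<in>J \<union> C'. d e * v e w) = 0) \<longrightarrow> (\<forall>e\<in>J. d e = 0)"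
      and Z: "\<forall>w. (\<Sum>e\<in>J \<union> C'. d e * v e w) = 0"
    show "\<forall>e\<in>J. d e = 0" using I Z by blast
  qed
qed

lemma imod_empty: "imod v {} J = lin v J" by (simp add: imod_def lin_def)

lemma vm_alt: "vm X v = (X, \<lambda>J. J \<subseteq> X \<and> imod v {} J)" by (simp add: vm_def imod_empty)

lemma contract_single:
  fixes v :: "'e \<Rightarrow> 'a \<Rightarrow> bit"
  assumes fin: "finite X" and c: "c \<in> X" and pk: "v c k = 1"
  shows "contract_matroid (vm X v) {c} = vm (X - {c}) (\<lambda>e w. v e w + v e k * v c w)"
proof -
  have "(J \<subseteq> X - {c} \<and> imod v {c} J) = (J \<subseteq> X - {c} \<and> imod (\<lambda>e w. v e w + v e k * v c w) {} J)" for J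
  proof (cases "J \<subseteq> X - {c}")
    case True
    then have "finite J" "c \<notin> J" using fin by (auto intro: finite_subset)
    then show ?thesis using imod_insert[of v c k J "{}", OF pk] by simp
  qed simp
  then show ?thesis using contract_vm[OF fin, of "{c}" v] c unfolding vm_alt by simp
qed

lemma contract_single0:
  fixes v :: "'e \<Rightarrow> 'a \<Rightarrow> bit"
  assumes fin: "finite X" and c: "c \<in> X" and p0: "\<forall>w. v c w = 0"
  shows "contract_matroid (vm X v) {c} = vm (X - {c}) v"
proof -
  have "(J \<subseteq> X - {c} \<and> imod v {c} J) = (J \<subseteq> X - {c} \<and> imod v {} J)" for J
  proof (cases "J \<subseteq> X - {c}")
    case True
    then have "finite J" "c \<notin> J" using fin by (auto intro: finite_subset)
    then show ?thesis using imod_insert0[of v c J "{}", OF p0] by simp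
  qed simp
  then show ?thesis using contract_vm[OF fin, of "{c}" v] c unfolding vm_alt by simp
qed

lemma contract_split:
  fixes v :: "'e \<Rightarrow> 'a \<Rightarrow> bit"
  assumes fin: "finite X" and cC: "insert c C' \<subseteq> X" and nc: "c \<notin> C'"
  shows "contract_matroid (vm X v) (insert c C') = contract_matroid (contract_matroid (vm X v) {c}) C'"
proof -
  have e1: "X - insert c C' = X - {c} - C'" by blast
  have e2: "C' \<subseteq> X - {c}" using cC nc by blast
  have c1: "c \<in> X" using cC by blast
  have fX: "finite (X - {c})" using fin by simp
  obtain v' :: "'e \<Rightarrow> 'a \<Rightarrow> bit" where eq: "\<And>J. (J \<subseteq> X - {c} - C' \<and> imod v (insert c C') J) = (J \<subseteq> X - {c} - C' \<and> imod v' C' J)"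
    and cs: "contract_matroid (vm X v) {c} = vm (X - {c}) v'"
  proof (cases "\<exists>k. v c k = 1")
    case True
    then obtain k where pk: "v c k = 1" by blast
    let ?v' = "\<lambda>e w. v e w + v e k * v c w"
    have eqk: "(J \<subseteq> X - {c} - C' \<and> imod v (insert c C') J) = (J \<subseteq> X - {c} - C' \<and> imod ?v' C' J)" for J
    proof (cases "J \<subseteq> X - {c} - C'")
      case True
      then have "finite J" "finite C'" "c \<notin> J" using fin cC by (auto intro: finite_subset)
      then show ?thesis using imod_insert[of v c k J C', OF pk] True nc by simp
    qed simp
    show ?thesis by (rule that[of ?v', OF eqk contract_single[of X c v k, OF fin c1 pk]])
  next
    case False
    then have p0: "\<forall>w. v c w = 0" by simp
    have eqk: "(J \<subseteq> X - {c} - C' \<and> imod v (insert c C') J) = (J \<subseteq> X - {c} - C' \<and> imod v C' J)" for J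
    proof (cases "J \<subseteq> X - {c} - C'")
      case True
      then have "finite J" "finite C'" "c \<notin> J" using fin cC by (auto intro: finite_subset)
      then show ?thesis using imod_insert0[of v c J C', OF p0] True nc by simp
    qed simp
    show ?thesis by (rule that[of v, OF eqk contract_single0[of X c v, OF fin c1 p0]])
  qed
  have "contract_matroid (vm X v) (insert c C') = (X - {c} - C', \<lambda>J. J \<subseteq> X - {c} - C' \<and> imod v' C' J)"
    by (simp only: contract_vm[OF fin cC] e1 eq)
  also have "\<dots> = contract_matroid (vm (X - {c}) v') C'" by (simp only: contract_vm[OF fX e2])
  finally show ?thesis by (simp only: cs)
qed

lemma delete_vm: "D \<subseteq> X \<Longrightarrow> delete_matroid (vm X v) D = vm (X - D) v"
  unfolding delete_matroid_def restrict_matroid_def vm_def ground_def indep_def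
  by (auto intro!: ext)




definition isof :: "('e \<Rightarrow> 'f) \<Rightarrow> 'e matroid \<Rightarrow> 'f matroid \<Rightarrow> bool" where
  "isof f M N \<longleftrightarrow> bij_betw f (ground M) (ground N) \<and> (\<forall>I \<subseteq> ground M. indep M I \<longleftrightarrow> indep N (f ` I))"

lemma matroid_iso_isof: "matroid_iso M N \<longleftrightarrow> (\<exists>f. isof f M N)"
  by (simp add: matroid_iso_def isof_def)

lemma ground_delete[simp]: "ground (delete_matroid M D) = ground M - D"
  by (simp add: delete_matroid_def restrict_matroid_def ground_def)
lemma indep_delete[simp]: "indep (delete_matroid M D) I = (I \<subseteq> ground M - D \<and> indep M I)"
  by (simp add: delete_matroid_def restrict_matroid_def indep_def ground_def)
lemma ground_contract[simp]: "ground (contract_matroid M C) = ground M - C"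
  by (simp add: contract_matroid_def ground_def)
lemma indep_contract[simp]: "indep (contract_matroid M C) J =
   (J \<subseteq> ground M - C \<and> (\<exists>B. basis_of M (C \<inter> ground M) B \<and> indep M (J \<union> B)))"
  by (simp add: contract_matroid_def indep_def ground_def)

lemma isof_refl: "isof id M M" by (simp add: isof_def)

lemma isof_trans: "isof f M N \<Longrightarrow> isof g N P \<Longrightarrow> isof (g \<circ> f) M P"
  unfolding isof_def
proof (intro conjI allI impI)
  assume a: "bij_betw f (ground M) (ground N) \<and> (\<forall>I\<subseteq>ground M. indep M I = indep N (f ` I))"
    and b: "bij_betw g (ground N) (ground P) \<and> (\<forall>I\<subseteq>ground N. indep N I = indep P (g ` I))"
  show "bij_betw (g \<circ> f) (ground M) (ground P)" using a b by (meson bij_betw_trans)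
  fix I assume I: "I \<subseteq> ground M"
  have fI: "f ` I \<subseteq> ground N" using a I unfolding bij_betw_def by blast
  have "indep M I = indep N (f ` I)" using a I by blast
  also have "\<dots> = indep P (g ` f ` I)" using b fI by blast
  finally show "indep M I = indep P ((g \<circ> f) ` I)" by (simp add: image_comp)
qed

lemma isof_sym:
  assumes "isof f M N"
  shows "isof (inv_into (ground M) f) N M"
proof -
  have bij: "bij_betw f (ground M) (ground N)" and ind: "\<forall>I\<subseteq>ground M. indep M I = indep N (f ` I)"
    using assms unfolding isof_def by auto
  have "bij_betw (inv_into (ground M) f) (ground N) (ground M)" using bij by (rule bij_betw_inv_into)
  moreover have "indep N I = indep M (inv_into (ground M) f ` I)" if I: "I \<subseteq> ground N" for I
  proof -
    have fim: "f ` ground M = ground N" using bij unfolding bij_betw_def by blast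
    have "I \<subseteq> f ` ground M" using I fim by simp
    then have sub: "inv_into (ground M) f ` I \<subseteq> ground M" by (auto intro: inv_into_into)
    have can: "f ` inv_into (ground M) f ` I = I" using image_inv_into_cancel[OF fim I] .
    have "indep M (inv_into (ground M) f ` I) = indep N (f ` inv_into (ground M) f ` I)"
      using ind sub by blast
    then show ?thesis unfolding can by simp
  qed
  ultimately show ?thesis unfolding isof_def by blast
qed

lemma isof_delete:
  assumes iso: "isof f M N" and D: "D \<subseteq> ground M"
  shows "isof f (delete_matroid M D) (delete_matroid N (f ` D))"
proof -
  have bij: "bij_betw f (ground M) (ground N)" and ind: "\<forall>I\<subseteq>ground M. indep M I = indep N (f ` I)"
    using iso unfolding isof_def by auto
  have inj: "inj_on f (ground M)" using bij by (simp add: bij_betw_def)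
  have "bij_betw f (ground M - D) (ground N - f ` D)"
  proof -
    have "f ` (ground M - D) = f ` ground M - f ` D" using inj D by (simp add: inj_on_image_set_diff)
    moreover have fim: "f ` ground M = ground N" using bij unfolding bij_betw_def by blast
    moreover have "inj_on f (ground M - D)" using inj_on_subset[OF inj Diff_subset] .
    ultimately show ?thesis unfolding bij_betw_def by simp
  qed
  moreover have "(I \<subseteq> ground M - D \<and> indep M I) = (f ` I \<subseteq> ground N - f ` D \<and> indep N (f ` I))"
    if "I \<subseteq> ground M - D" for I
  proof -
    have "f ` I \<subseteq> f ` (ground M - D)" using that by blast
    then have "f ` I \<subseteq> ground N - f ` D" using \<open>bij_betw f (ground M - D) (ground N - f ` D)\<close>
      unfolding bij_betw_def by simp
    moreover have "indep M I = indep N (f ` I)" using that ind by blast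
    ultimately show ?thesis using that by simp
  qed
  ultimately show ?thesis unfolding isof_def ground_delete indep_delete by blast
qed

lemma basis_transfer:
  assumes iso: "isof f M N" and C: "C \<subseteq> ground M" and b: "basis_of M C B"
  shows "basis_of N (f ` C) (f ` B)"
proof -
  have bij: "bij_betw f (ground M) (ground N)" and ind: "\<forall>I\<subseteq>ground M. indep M I = indep N (f ` I)"
    using iso unfolding isof_def by auto
  have inj: "inj_on f (ground M)" using bij by (simp add: bij_betw_def)
  have fim: "f ` ground M = ground N" using bij unfolding bij_betw_def by blast
  have BC: "B \<subseteq> C" and iB: "indep M B" and mx: "\<And>B'. B \<subset> B' \<Longrightarrow> B' \<subseteq> C \<Longrightarrow> \<not> indep M B'"
    using b unfolding basis_of_def by auto
  show ?thesis unfolding basis_of_def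
  proof (intro conjI allI impI)
    show "f ` B \<subseteq> f ` C" using BC by blast
    have "B \<subseteq> ground M" using BC C by blast
    then show "indep N (f ` B)" using ind iB by blast
    fix B'' assume h: "f ` B \<subset> B'' \<and> B'' \<subseteq> f ` C"
    let ?X = "inv_into (ground M) f ` B''"
    have "f ` C \<subseteq> ground N" using C fim by blast
    then have B''N: "B'' \<subseteq> ground N" using h by blast
    have fX: "f ` ?X = B''" using image_inv_into_cancel[OF fim B''N] .
    have XC: "?X \<subseteq> C"
    proof
      fix x assume "x \<in> ?X"
      then obtain y where y: "y \<in> B''" "x = inv_into (ground M) f y" by blast
      then obtain z where z: "z \<in> C" "y = f z" using h by blast
      have "z \<in> ground M" using z C by blast
      then have "x = z" using y(2) z(2) inv_into_f_f[OF inj] by simp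
      then show "x \<in> C" using z by simp
    qed
    have "B \<subseteq> ?X"
    proof
      fix x assume x: "x \<in> B"
      then have "f x \<in> B''" using h by blast
      then have "inv_into (ground M) f (f x) \<in> ?X" by blast
      moreover have "x \<in> ground M" using x BC C by blast
      ultimately show "x \<in> ?X" using inv_into_f_f[OF inj] by simp
    qed
    moreover have "B \<noteq> ?X"
    proof
      assume "B = ?X"
      then have "f ` B = B''" using fX by simp
      then show False using h by blast
    qed
    ultimately have "\<not> indep M ?X" using mx XC by blast
    moreover have "?X \<subseteq> ground M" using XC C by blast
    then have "indep M ?X = indep N (f ` ?X)" using ind by blast
    ultimately show "\<not> indep N B''" using fX by simp
  qed
qed

lemma isof_contract:
  assumes iso: "isof f M N" and C: "C \<subseteq> ground M"
  shows "isof f (contract_matroid M C) (contract_matroid N (f ` C))"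
proof -
  have bij: "bij_betw f (ground M) (ground N)" and ind: "\<forall>I\<subseteq>ground M. indep M I = indep N (f ` I)"
    using iso unfolding isof_def by auto
  have inj: "inj_on f (ground M)" using bij by (simp add: bij_betw_def)
  have fim: "f ` ground M = ground N" using bij unfolding bij_betw_def by blast
  let ?g = "inv_into (ground M) f"
  have iso2: "isof ?g N M" using isof_sym[OF iso] .
  have fC: "f ` C \<subseteq> ground N" using C fim by blast
  have gfC: "?g ` f ` C = C" using C inj by (simp add: inv_into_image_cancel)
  have CM: "C \<inter> ground M = C" using C by blast
  have CN: "f ` C \<inter> ground N = f ` C" using fC by blast
  have bij2: "bij_betw f (ground M - C) (ground N - f ` C)"
  proof -
    have "f ` (ground M - C) = f ` ground M - f ` C" using inj C by (simp add: inj_on_image_set_diff)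
    moreover have "inj_on f (ground M - C)" using inj_on_subset[OF inj Diff_subset] .
    ultimately show ?thesis unfolding bij_betw_def using fim by simp
  qed
  have eq: "(\<exists>B. basis_of M C B \<and> indep M (J \<union> B)) = (\<exists>B. basis_of N (f ` C) B \<and> indep N (f ` J \<union> B))"
    if J: "J \<subseteq> ground M - C" for J
  proof
    assume "\<exists>B. basis_of M C B \<and> indep M (J \<union> B)"
    then obtain B where B: "basis_of M C B" "indep M (J \<union> B)" by blast
    have "B \<subseteq> C" using B unfolding basis_of_def by blast
    then have "J \<union> B \<subseteq> ground M" using J C by blast
    then have "indep N (f ` (J \<union> B))" using ind B(2) by blast
    then have "indep N (f ` J \<union> f ` B)" by (simp only: image_Un)
    then show "\<exists>B. basis_of N (f ` C) B \<and> indep N (f ` J \<union> B)"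
      using basis_transfer[OF iso C B(1)] by blast
  next
    assume "\<exists>B. basis_of N (f ` C) B \<and> indep N (f ` J \<union> B)"
    then obtain B where B: "basis_of N (f ` C) B" "indep N (f ` J \<union> B)" by blast
    have BfC: "B \<subseteq> f ` C" using B unfolding basis_of_def by blast
    have b2: "basis_of M C (?g ` B)" using basis_transfer[OF iso2 fC B(1)] unfolding gfC .
    have JM: "J \<subseteq> ground M" using J by blast
    have gJ: "?g ` f ` J = J" by (rule inv_into_image_cancel[OF inj JM])
    have "f ` J \<union> B \<subseteq> ground N" using J fim BfC fC by blast
    then have "indep M (?g ` (f ` J \<union> B))" using iso2 B(2) unfolding isof_def by blast
    then have "indep M (J \<union> ?g ` B)" unfolding image_Un gJ .
    then show "\<exists>B. basis_of M C B \<and> indep M (J \<union> B)" using b2 by blast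
  qed
  have sub: "f ` J \<subseteq> ground N - f ` C" if "J \<subseteq> ground M - C" for J
    using that bij2 unfolding bij_betw_def by blast
  show ?thesis unfolding isof_def ground_contract indep_contract CM CN
  proof (intro conjI allI impI)
    show "bij_betw f (ground M - C) (ground N - f ` C)" by (rule bij2)
    fix J assume J: "J \<subseteq> ground M - C"
    show "(J \<subseteq> ground M - C \<and> (\<exists>B. basis_of M C B \<and> indep M (J \<union> B))) =
          (f ` J \<subseteq> ground N - f ` C \<and> (\<exists>B. basis_of N (f ` C) B \<and> indep N (f ` J \<union> B)))"
      using eq[OF J] sub[OF J] J by simp
  qed
qed




definition colV :: "'a lgraph \<Rightarrow> 'a welt \<Rightarrow> 'a \<Rightarrow> bit" where
  "colV H e w = (if w \<in> verts H then col H e w else 0)"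

fun vx :: "'a welt \<Rightarrow> 'a" where "vx (Phi v) = v" | "vx (Chi v) = v" | "vx (Psi v) = v"
fun isA :: "'a welt \<Rightarrow> bit" where "isA (Phi v) = 1" | "isA (Chi v) = 0" | "isA (Psi v) = 1"
fun isB :: "'a welt \<Rightarrow> bit" where "isB (Phi v) = 0" | "isB (Chi v) = 1" | "isB (Psi v) = 1"

definition dl :: "'a \<Rightarrow> 'a \<Rightarrow> bit" where "dl v w = (if w = v then 1 else 0)"
definition nb :: "'a lgraph \<Rightarrow> 'a \<Rightarrow> 'a \<Rightarrow> bit" where "nb H v w = (if neighbor H v w then 1 else 0)"

lemma col_AB: "col H e w = isA e * dl (vx e) w + isB e * adjmat H w (vx e)"
  by (cases e) (simp_all add: dl_def)

lemma W_vx: "e \<in> W H \<longleftrightarrow> vx e \<in> verts H"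
  by (cases e) (auto simp: W_def)

lemma triple_vx: "{Phi w, Chi w, Psi w} = {e. vx e = w}"
proof -
  have "vx e = w \<Longrightarrow> e \<in> {Phi w, Chi w, Psi w}" for e by (cases e) auto
  then show ?thesis by auto
qed

lemma transversal_alt:
  "transversal H T \<longleftrightarrow> T \<subseteq> W H \<and> (\<forall>w \<in> verts H. \<exists>!e. e \<in> T \<and> vx e = w)"
proof -
  have "card (T \<inter> {e. vx e = w}) = 1 \<longleftrightarrow> (\<exists>!e. e \<in> T \<and> vx e = w)" for w
  proof
    assume "card (T \<inter> {e. vx e = w}) = 1"
    then obtain x where "T \<inter> {e. vx e = w} = {x}" by (auto simp: card_1_singleton_iff)
    then show "\<exists>!e. e \<in> T \<and> vx e = w" by (metis (mono_tags, lifting) Int_iff mem_Collect_eq singletonD singletonI)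
  next
    assume "\<exists>!e. e \<in> T \<and> vx e = w"
    then obtain x where "x \<in> T" "vx x = w" "\<forall>y. y \<in> T \<and> vx y = w \<longrightarrow> y = x" by blast
    then have "T \<inter> {e. vx e = w} = {x}" by blast
    then show "card (T \<inter> {e. vx e = w}) = 1" by simp
  qed
  then show ?thesis unfolding transversal_def triple_vx by simp
qed

lemma finite_W: "looped_simple_graph H \<Longrightarrow> finite (W H)"
  unfolding W_def looped_simple_graph_def by simp

lemma tm_vm:
  assumes "T \<subseteq> W H"
  shows "transverse_matroid H T = vm T (colV H)"
proof -
  have key: "(\<forall>w\<in>verts H. (\<Sum>e\<in>I. c e * col H e w) = 0) = (\<forall>w. (\<Sum>e\<in>I. c e * colV H e w) = 0)" for c I
  proof -
    have "(\<Sum>e\<in>I. c e * colV H e w) = (if w \<in> verts H then (\<Sum>e\<in>I. c e * col H e w) else 0)" for w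
      by (cases "w \<in> verts H") (simp_all add: colV_def)
    then show ?thesis by (simp add: Ball_def)
  qed
  have "(I \<subseteq> T \<and> I \<subseteq> W H \<and> (\<forall>c. (\<forall>w\<in>verts H. (\<Sum>e\<in>I. c e * col H e w) = 0) \<longrightarrow> (\<forall>e\<in>I. c e = 0)))
      = (I \<subseteq> T \<and> lin (colV H) I)" for I
    unfolding lin_def key using assms by blast
  then show ?thesis
    unfolding transverse_matroid_def restrict_matroid_def IAS_matroid_def vm_def indep_def by simp
qed

lemma ground_tm[simp]: "ground (transverse_matroid H T) = T"
  by (simp add: transverse_matroid_def restrict_matroid_def ground_def)

section \<open>Graph operations\<close>

lemma verts_ns[simp]: "verts (ns_compl z H) = verts H" by (simp add: ns_compl_def verts_def)
lemma rel_ns: "rel (ns_compl z H) x y = (if (x \<noteq> y \<and> neighbor H z x \<and> neighbor H z y) \<or> (x = y \<and> neighbor H z x)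
     then \<not> rel H x y else rel H x y)" by (simp add: ns_compl_def rel_def)
lemma verts_del[simp]: "verts (delete_vertex v H) = verts H - {v}" by (simp add: delete_vertex_def verts_def)
lemma rel_del: "rel (delete_vertex v H) x y = (x \<noteq> v \<and> y \<noteq> v \<and> rel H x y)" by (simp add: delete_vertex_def rel_def)
lemma W_ns[simp]: "W (ns_compl z H) = W H" by (simp add: W_def)

lemma lsg_ns: 
  assumes g: "looped_simple_graph H" shows "looped_simple_graph (ns_compl z H)"
proof -
  have fin: "finite (verts H)" and cl: "\<And>x y. rel H x y \<Longrightarrow> x \<in> verts H \<and> y \<in> verts H"
    and sy: "\<And>x y. rel H x y = rel H y x"
    using g unfolding looped_simple_graph_def by auto
  show ?thesis unfolding looped_simple_graph_def verts_ns
  proof (intro conjI allI impI)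
    show "finite (verts H)" by (rule fin)
    fix x y
    show "rel (ns_compl z H) x y = rel (ns_compl z H) y x"
      unfolding rel_ns neighbor_def using sy[of x y] by auto
    assume "rel (ns_compl z H) x y"
    then show "x \<in> verts H" "y \<in> verts H" unfolding rel_ns neighbor_def using cl[of x y] cl[of z x] cl[of z y]
      by (auto split: if_splits)
  qed
qed

lemma lsg_del: "looped_simple_graph H \<Longrightarrow> looped_simple_graph (delete_vertex v H)"
  unfolding looped_simple_graph_def rel_del verts_del by auto

lemma vertex_minor_trans: "vertex_minor H K \<Longrightarrow> vertex_minor G H \<Longrightarrow> vertex_minor G K"
  by (induction rule: vertex_minor.induct) (auto intro: vertex_minor.intros)

lemma vm_ns: "z \<in> verts H \<Longrightarrow> vertex_minor H (ns_compl z H)"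
  by (rule vertex_minor.ns[OF vertex_minor.refl])
lemma vm_del: "z \<in> verts H \<Longrightarrow> vertex_minor H (delete_vertex z H)"
  by (rule vertex_minor.del[OF vertex_minor.refl])
lemma vm_ns_del: "z \<in> verts H \<Longrightarrow> vertex_minor H (delete_vertex z (ns_compl z H))"
  by (rule vertex_minor.del[OF vertex_minor.ns[OF vertex_minor.refl]]) simp_all

section \<open>Column formulas\<close>

lemma lsgD:
  assumes "looped_simple_graph H"
  shows "finite (verts H)" "rel H x y \<Longrightarrow> x \<in> verts H" "rel H x y \<Longrightarrow> y \<in> verts H" "rel H x y = rel H y x"
  using assms unfolding looped_simple_graph_def by auto

lemma colV_del: "vx f \<noteq> v \<Longrightarrow> colV (delete_vertex v H) f w = (if w = v then 0 else colV H f w)"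
  by (cases f) (auto simp: colV_def adjmat_def rel_del)

lemma colV_ns_other:
  assumes g: "looped_simple_graph H" and f: "vx f \<noteq> z"
  shows "colV (ns_compl z H) f w = colV H f w + colV H f z * nb H z w"
proof -
  note D = lsgD[OF g]
  show ?thesis
  proof (cases f)
    case (Phi u)
    then show ?thesis using f by (simp add: colV_def)
  next
    case (Chi u)
    then show ?thesis using f D(2,3,4)[of z w] D(2,3,4)[of w u] D(2,3,4)[of z u]
      by (auto simp: colV_def adjmat_def rel_ns nb_def neighbor_def)
  next
    case (Psi u)
    then show ?thesis using f D(2,3,4)[of z w] D(2,3,4)[of w u] D(2,3,4)[of z u]
      by (auto simp: colV_def adjmat_def rel_ns nb_def neighbor_def)
  qed
qed

definition sg :: "'a lgraph \<Rightarrow> 'a \<Rightarrow> 'a welt \<Rightarrow> 'a welt" where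
  "sg H z e = (if e = Phi z then (if rel H z z then Chi z else Psi z)
      else if e = (if rel H z z then Chi z else Psi z) then Phi z else e)"

lemma sg_sg[simp]: "sg H z (sg H z e) = e" by (auto simp: sg_def)
lemma vx_sg[simp]: "vx (sg H z e) = vx e" by (auto simp: sg_def)
lemma sg_other: "vx e \<noteq> z \<Longrightarrow> sg H z e = e" by (auto simp: sg_def)

lemma colV_ns_sg:
  assumes g: "looped_simple_graph H"
  shows "colV (ns_compl z H) (sg H z e) w = colV H e w + colV H e z * nb H z w"
proof (cases "vx e = z")
  case False
  then show ?thesis using colV_ns_other[OF g False] by (simp add: sg_other)
next
  case True
  note D = lsgD[OF g]
  have rz: "rel (ns_compl z H) x z = rel H x z" for x by (simp add: rel_ns neighbor_def)
  show ?thesis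
  proof (cases e)
    case (Phi u)
    then show ?thesis using True D(2,3,4)[of z w]
      by (auto simp: sg_def colV_def adjmat_def rz nb_def neighbor_def)
  next
    case (Chi u)
    then show ?thesis using True D(2,3,4)[of z w]
      by (auto simp: sg_def colV_def adjmat_def rz nb_def neighbor_def)
  next
    case (Psi u)
    then show ?thesis using True D(2,3,4)[of z w]
      by (auto simp: sg_def colV_def adjmat_def rz nb_def neighbor_def)
  qed
qed




lemma rowop:
  fixes v :: "'e \<Rightarrow> 'a \<Rightarrow> bit"
  assumes az: "a z = 0"
  shows "lin (\<lambda>e w. v e w + v e z * a w) I = lin v I"
proof -
  have s: "(\<Sum>e\<in>I. c e * (v e w + v e z * a w)) = (\<Sum>e\<in>I. c e * v e w) + (\<Sum>e\<in>I. c e * v e z) * a w" for c w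
    by (simp add: distrib_left sum.distrib sum_distrib_right mult.assoc)
  have "(\<forall>w. (\<Sum>e\<in>I. c e * v e w) + (\<Sum>e\<in>I. c e * v e z) * a w = 0) = (\<forall>w. (\<Sum>e\<in>I. c e * v e w) = 0)" for c
  proof
    assume h: "\<forall>w. (\<Sum>e\<in>I. c e * v e w) + (\<Sum>e\<in>I. c e * v e z) * a w = 0"
    have "(\<Sum>e\<in>I. c e * v e z) = 0" using h[rule_format, of z] az by simp
    then show "\<forall>w. (\<Sum>e\<in>I. c e * v e w) = 0" using h by simp
  qed simp
  then show ?thesis unfolding lin_def s by simp
qed

lemma lin_cong: "(\<And>e w. e \<in> I \<Longrightarrow> v e w = v' e w) \<Longrightarrow> lin v I = lin v' I"
proof -
  assume h: "\<And>e w. e \<in> I \<Longrightarrow> v e w = v' e w"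
  have "(\<Sum>e\<in>I. c e * v e w) = (\<Sum>e\<in>I. c e * v' e w)" for c w by (rule sum.cong) (simp_all add: h)
  then show ?thesis unfolding lin_def by simp
qed

lemma vm_eqI: "(\<And>I. I \<subseteq> X \<Longrightarrow> lin v I = lin v' I) \<Longrightarrow> vm X v = vm X v'"
  unfolding vm_def by (auto intro!: ext)

lemma lin_reindex:
  assumes inv: "\<And>e. \<sigma> (\<sigma> e) = e"
  shows "lin v (\<sigma> ` I) = lin (\<lambda>e. v (\<sigma> e)) I"
proof -
  have inj: "inj_on \<sigma> I" by (metis inj_onI inv)
  have s: "(\<Sum>e\<in>\<sigma> ` I. c e * v e w) = (\<Sum>e\<in>I. c (\<sigma> e) * v (\<sigma> e) w)" for c w
    using sum.reindex[OF inj, of "\<lambda>e. c e * v e w"] by simp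
  show ?thesis
  proof
    assume L: "lin v (\<sigma> ` I)"
    show "lin (\<lambda>e. v (\<sigma> e)) I" unfolding lin_def
    proof (intro allI impI ballI)
      fix c e assume Z: "\<forall>w. (\<Sum>e\<in>I. c e * v (\<sigma> e) w) = 0" and e: "e \<in> I"
      have "\<forall>w. (\<Sum>e\<in>\<sigma> ` I. (c \<circ> \<sigma>) e * v e w) = 0" unfolding s using Z by (simp add: inv)
      then have "\<forall>e\<in>\<sigma> ` I. (c \<circ> \<sigma>) e = 0" using L unfolding lin_def by blast
      then show "c e = 0" using e inv by force
    qed
  next
    assume L: "lin (\<lambda>e. v (\<sigma> e)) I"
    show "lin v (\<sigma> ` I)" unfolding lin_def
    proof (intro allI impI)
      fix c assume Z: "\<forall>w. (\<Sum>e\<in>\<sigma> ` I. c e * v e w) = 0"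
      then have "\<forall>w. (\<Sum>e\<in>I. (c \<circ> \<sigma>) e * v (\<sigma> e) w) = 0" unfolding s by simp
      then have "\<forall>e\<in>I. (c \<circ> \<sigma>) e = 0" using L unfolding lin_def by blast
      then show "\<forall>e\<in>\<sigma> ` I. c e = 0" by auto
    qed
  qed
qed

lemma nb_self[simp]: "nb H z z = 0" by (simp add: nb_def neighbor_def)

lemma isof_ns:
  assumes g: "looped_simple_graph H"
  shows "isof (sg H z) (vm T (colV H)) (vm (sg H z ` T) (colV (ns_compl z H)))"
proof -
  have inj: "inj_on (sg H z) T" by (metis inj_onI sg_sg)
  have "lin (colV (ns_compl z H)) (sg H z ` I) = lin (colV H) I" for I
  proof -
    have "lin (colV (ns_compl z H)) (sg H z ` I) = lin (\<lambda>e. colV (ns_compl z H) (sg H z e)) I"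
      by (rule lin_reindex) simp
    also have "\<dots> = lin (\<lambda>e w. colV H e w + colV H e z * nb H z w) I"
      by (rule lin_cong) (simp add: colV_ns_sg[OF g])
    also have "\<dots> = lin (colV H) I" by (rule rowop) simp
    finally show ?thesis .
  qed
  moreover have "I \<subseteq> T \<Longrightarrow> sg H z ` I \<subseteq> sg H z ` T" for I by blast
  ultimately show ?thesis unfolding isof_def using inj by (simp add: bij_betw_def)
qed

lemma transversal_uniq:
  assumes t: "transversal H T" and a: "a \<in> T" and b: "b \<in> T" and ab: "vx a = vx b"
  shows "a = b"
proof -
  have TW: "T \<subseteq> W H" and u: "\<forall>w\<in>verts H. \<exists>!e. e \<in> T \<and> vx e = w" using t unfolding transversal_alt by auto
  have "vx a \<in> verts H" using TW a by (auto simp: W_vx)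
  then have "\<exists>!e. e \<in> T \<and> vx e = vx a" using u by blast
  then obtain x where x: "\<And>y. (y \<in> T \<and> vx y = vx a) = (y = x)" by (metis (mono_tags, lifting))
  have "a = x" using x[of a] a by blast
  moreover have "b = x" using x[of b] b ab[symmetric] by simp
  ultimately show ?thesis by simp
qed

lemma transversal_ex:
  assumes t: "transversal H T" and w: "w \<in> verts H"
  obtains e where "e \<in> T" "vx e = w"
  using t w unfolding transversal_alt by blast

lemma transversal_sg:
  assumes t: "transversal H T"
  shows "transversal (ns_compl z H) (sg H z ` T)"
proof -
  have TW: "T \<subseteq> W H" using t unfolding transversal_alt by auto
  have "sg H z ` T \<subseteq> W H" using TW by (auto simp: W_vx)
  moreover have "\<exists>!e. e \<in> sg H z ` T \<and> vx e = w" if w: "w \<in> verts H" for w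
  proof -
    obtain e0 where e0: "e0 \<in> T" "vx e0 = w" using transversal_ex[OF t w] by blast
    show ?thesis
    proof (rule ex1I[of _ "sg H z e0"])
      show "sg H z e0 \<in> sg H z ` T \<and> vx (sg H z e0) = w" using e0 by simp
      fix y assume "y \<in> sg H z ` T \<and> vx y = w"
      then obtain a where a: "a \<in> T" "y = sg H z a" "vx a = w" by auto
      then have "a = e0" using transversal_uniq[OF t a(1) e0(1)] e0 by simp
      then show "y = sg H z e0" using a by simp
    qed
  qed
  ultimately show ?thesis unfolding transversal_alt by simp
qed

lemma transversal_ns: "transversal (ns_compl z H) T = transversal H T"
  by (simp add: transversal_alt)

lemma transversal_vx:
  assumes t: "transversal H T" and e: "e \<in> T" and f: "f \<in> T - {e}"
  shows "vx f \<noteq> vx e" "vx f \<in> verts H"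
proof -
  have TW: "T \<subseteq> W H" using t unfolding transversal_alt by auto
  show "vx f \<noteq> vx e" using transversal_uniq[OF t _ e, of f] f by blast
  show "vx f \<in> verts H" using TW f by (auto simp: W_vx)
qed

lemma transversal_del:
  assumes t: "transversal H T" and e: "e \<in> T"
  shows "transversal (delete_vertex (vx e) H) (T - {e})"
proof -
  have "T - {e} \<subseteq> W (delete_vertex (vx e) H)"
  proof
    fix f assume f: "f \<in> T - {e}"
    then show "f \<in> W (delete_vertex (vx e) H)" using transversal_vx[OF t e f] by (simp add: W_vx)
  qed
  moreover have "\<exists>!f. f \<in> T - {e} \<and> vx f = w" if "w \<in> verts (delete_vertex (vx e) H)" for w
  proof -
    have w: "w \<in> verts H" "w \<noteq> vx e" using that by auto
    obtain e0 where e0: "e0 \<in> T" "vx e0 = w" using transversal_ex[OF t w(1)] by blast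
    show ?thesis
    proof (rule ex1I[of _ e0])
      show "e0 \<in> T - {e} \<and> vx e0 = w" using e0 w by auto
      fix y assume "y \<in> T - {e} \<and> vx y = w"
      then show "y = e0" using transversal_uniq[OF t _ e0(1), of y] e0 by auto
    qed
  qed
  ultimately show ?thesis unfolding transversal_alt by blast
qed




lemma del_equiv:
  fixes v' :: "'e \<Rightarrow> 'a \<Rightarrow> bit"
  assumes ns: "\<not>(\<exists>d. \<forall>w. dl z w = (\<Sum>f\<in>S. d f * v' f w))" and I: "I \<subseteq> S" and fS: "finite S"
  shows "lin (\<lambda>f w. v' f w + v' f z * dl z w) I = lin v' I"
proof -
  have s: "(\<Sum>e\<in>I. c e * (v' e w + v' e z * dl z w)) = (\<Sum>e\<in>I. c e * v' e w) + (\<Sum>e\<in>I. c e * v' e z) * dl z w" for c w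
    by (simp add: distrib_left sum.distrib sum_distrib_right mult.assoc)
  have "(\<forall>w. (\<Sum>e\<in>I. c e * v' e w) + (\<Sum>e\<in>I. c e * v' e z) * dl z w = 0) = (\<forall>w. (\<Sum>e\<in>I. c e * v' e w) = 0)" for c
  proof
    assume h: "\<forall>w. (\<Sum>e\<in>I. c e * v' e w) + (\<Sum>e\<in>I. c e * v' e z) * dl z w = 0"
    show "\<forall>w. (\<Sum>e\<in>I. c e * v' e w) = 0"
    proof (cases "(\<Sum>e\<in>I. c e * v' e z) = 0")
      case True
      then show ?thesis using h by simp
    next
      case False
      then have one: "(\<Sum>e\<in>I. c e * v' e z) = 1" by simp
      define d where "d f = (if f \<in> I then c f else 0)" for f
      have "\<forall>w. dl z w = (\<Sum>f\<in>S. d f * v' f w)"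
      proof
        fix w
        have "(\<Sum>f\<in>S. d f * v' f w) = (\<Sum>f\<in>I. d f * v' f w)"
          by (rule sum.mono_neutral_right[OF fS I]) (simp add: d_def)
        also have "\<dots> = (\<Sum>f\<in>I. c f * v' f w)" by (rule sum.cong) (simp_all add: d_def)
        also have "\<dots> = dl z w" using h[rule_format, of w] one by (simp add: bit_eq_iff_add)
        finally show "dl z w = (\<Sum>f\<in>S. d f * v' f w)" by simp
      qed
      then show ?thesis using ns by blast
    qed
  qed simp
  then show ?thesis unfolding lin_def s by simp
qed

lemma isotropy:
  assumes g: "looped_simple_graph H" and t: "transversal H T" and e: "e \<in> T"
    and d1: "\<forall>w. dl (vx e) w = (\<Sum>f\<in>T - {e}. d1 f * colV H f w)"
    and d2: "\<forall>w. nb H (vx e) w = (\<Sum>f\<in>T - {e}. d2 f * colV H f w)"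
  shows False
proof -
  define S where "S = T - {e}"
  define v where "v = vx e"
  have TW: "T \<subseteq> W H" using t unfolding transversal_alt by auto
  have fS: "finite S" using finite_subset[OF TW finite_W[OF g]] unfolding S_def by simp
  have Sv: "vx g \<noteq> v" "vx g \<in> verts H" if "g \<in> S" for g
    using transversal_vx[OF t e, of g] that unfolding S_def v_def by auto
  have vV: "v \<in> verts H" using TW e unfolding v_def by (auto simp: W_vx)
  have cc: "colV H f w = col H f w" if "w \<in> verts H" for f w using that by (simp add: colV_def)
  have sym: "adjmat H a b = adjmat H b a" for a b using lsgD(4)[OF g] by (simp add: adjmat_def)
  have pw: "isB g * col H f (vx g) + isB f * col H g (vx f) = 0" if f: "f \<in> S" and gS: "g \<in> S" for f g
  proof (cases "vx f = vx g")
    case True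
    then have "f = g" using transversal_uniq[OF t] f gS unfolding S_def by blast
    then show ?thesis by simp
  next
    case False
    have a1: "isB g * col H f (vx g) = isB g * (isB f * adjmat H (vx g) (vx f))"
      using False by (simp add: col_AB dl_def)
    have a2: "isB f * col H g (vx f) = isB g * (isB f * adjmat H (vx g) (vx f))"
      using False by (simp add: col_AB dl_def sym[of "vx f" "vx g"] mult.left_commute)
    show ?thesis unfolding a1 a2 by simp
  qed
  have x1g: "(\<Sum>f\<in>S. d1 f * col H f (vx g)) = 0" if gS: "g \<in> S" for g
  proof -
    have "dl v (vx g) = (\<Sum>f\<in>S. d1 f * colV H f (vx g))" using d1 unfolding S_def v_def by blast
    also have "\<dots> = (\<Sum>f\<in>S. d1 f * col H f (vx g))" using cc Sv(2)[OF gS] by simp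
    finally show ?thesis using Sv(1)[OF gS] by (simp add: dl_def)
  qed
  have x2g: "(\<Sum>f\<in>S. d2 f * col H f (vx g)) = adjmat H v (vx g)" if gS: "g \<in> S" for g
  proof -
    have "nb H v (vx g) = (\<Sum>f\<in>S. d2 f * colV H f (vx g))" using d2 unfolding S_def v_def by blast
    also have "\<dots> = (\<Sum>f\<in>S. d2 f * col H f (vx g))" using cc Sv(2)[OF gS] by simp
    finally show ?thesis using Sv(1)[OF gS] by (simp add: nb_def neighbor_def adjmat_def)
  qed
  define L1 where "L1 = (\<Sum>g\<in>S. d2 g * isB g * (\<Sum>f\<in>S. d1 f * col H f (vx g)))"
  define L2 where "L2 = (\<Sum>g\<in>S. d1 g * isB g * (\<Sum>f\<in>S. d2 f * col H f (vx g)))"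
  have L1z: "L1 = 0" unfolding L1_def using x1g by simp
  have A: "L2 = (\<Sum>g\<in>S. \<Sum>f\<in>S. d1 f * isB f * (d2 g * col H g (vx f)))"
  proof -
    have "L2 = (\<Sum>g\<in>S. \<Sum>f\<in>S. d1 g * isB g * (d2 f * col H f (vx g)))"
      unfolding L2_def by (simp add: sum_distrib_left)
    also have "\<dots> = (\<Sum>f\<in>S. \<Sum>g\<in>S. d1 g * isB g * (d2 f * col H f (vx g)))" by (rule sum.swap)
    finally show ?thesis .
  qed
  have B: "L1 = (\<Sum>g\<in>S. \<Sum>f\<in>S. d2 g * isB g * (d1 f * col H f (vx g)))"
    unfolding L1_def by (simp add: sum_distrib_left)
  have C: "L1 + L2 = (\<Sum>g\<in>S. \<Sum>f\<in>S. (d2 g * d1 f) * (isB g * col H f (vx g) + isB f * col H g (vx f)))"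
    unfolding A B sum.distrib[symmetric] by (intro sum.cong refl) (simp_all add: distrib_left mult.commute mult.left_commute)
  have "L1 + L2 = 0" unfolding C using pw by simp
  then have L2z: "L2 = 0" using L1z by simp
  have L2': "L2 = (\<Sum>g\<in>S. d1 g * isB g * adjmat H v (vx g))"
    unfolding L2_def using x2g by simp
  have "1 = dl v v" by (simp add: dl_def)
  also have "\<dots> = (\<Sum>f\<in>S. d1 f * colV H f v)" using d1 unfolding S_def v_def by blast
  also have "\<dots> = (\<Sum>f\<in>S. d1 f * (isA f * dl (vx f) v + isB f * adjmat H v (vx f)))"
    using cc[OF vV] by (simp add: col_AB)
  also have "\<dots> = (\<Sum>f\<in>S. d1 f * isB f * adjmat H v (vx f))"
  proof (rule sum.cong)
    fix f assume "f \<in> S"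
    then have "dl (vx f) v = 0" using Sv(1) by (auto simp: dl_def)
    then show "d1 f * (isA f * dl (vx f) v + isB f * adjmat H v (vx f)) = d1 f * isB f * adjmat H v (vx f)"
      by (simp add: mult.assoc)
  qed simp
  also have "\<dots> = 0" using L2z L2' by simp
  finally show False by simp
qed




lemma TW_of: "transversal H T \<Longrightarrow> T \<subseteq> W H" unfolding transversal_alt by auto
lemma finT: "looped_simple_graph H \<Longrightarrow> transversal H T \<Longrightarrow> finite T"
  using finite_subset[OF TW_of finite_W] by blast
lemma vxV: "transversal H T \<Longrightarrow> e \<in> T \<Longrightarrow> vx e \<in> verts H"
  using TW_of W_vx by blast

lemma del_case:
  assumes g: "looped_simple_graph G" and t: "transversal G T" and e: "e \<in> T"
    and ns: "\<not>(\<exists>d. \<forall>w. dl (vx e) w = (\<Sum>f\<in>T - {e}. d f * colV G f w))"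
  shows "vm (T - {e}) (colV G) = vm (T - {e}) (colV (delete_vertex (vx e) G))"
proof (rule vm_eqI)
  fix I assume I: "I \<subseteq> T - {e}"
  have fS: "finite (T - {e})" using finT[OF g t] by simp
  have "lin (colV (delete_vertex (vx e) G)) I = lin (\<lambda>f w. colV G f w + colV G f (vx e) * dl (vx e) w) I"
  proof (rule lin_cong)
    fix f w assume f: "f \<in> I"
    then have "vx f \<noteq> vx e" using transversal_vx[OF t e] I by blast
    then show "colV (delete_vertex (vx e) G) f w = colV G f w + colV G f (vx e) * dl (vx e) w"
      by (simp add: colV_del dl_def)
  qed
  also have "\<dots> = lin (colV G) I" by (rule del_equiv[OF ns I fS])
  finally show "lin (colV G) I = lin (colV (delete_vertex (vx e) G)) I" by simp
qed

lemma delete_one: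
  assumes g: "looped_simple_graph H" and t: "transversal H T" and e: "e \<in> T"
  shows "\<exists>H'. vertex_minor H H' \<and> looped_simple_graph H' \<and> transversal H' (T - {e}) \<and>
     delete_matroid (transverse_matroid H T) {e} = transverse_matroid H' (T - {e})"
proof -
  have TW: "T \<subseteq> W H" by (rule TW_of[OF t])
  have vV: "vx e \<in> verts H" by (rule vxV[OF t e])
  have D: "delete_matroid (transverse_matroid H T) {e} = vm (T - {e}) (colV H)"
    using tm_vm[OF TW] delete_vm[of "{e}" T "colV H"] e by simp
  show ?thesis
  proof (cases "\<exists>d. \<forall>w. dl (vx e) w = (\<Sum>f\<in>T - {e}. d f * colV H f w)")
    case False
    let ?H' = "delete_vertex (vx e) H"
    have tr: "transversal ?H' (T - {e})" by (rule transversal_del[OF t e])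
    have "transverse_matroid ?H' (T - {e}) = vm (T - {e}) (colV ?H')" by (rule tm_vm[OF TW_of[OF tr]])
    then have "delete_matroid (transverse_matroid H T) {e} = transverse_matroid ?H' (T - {e})"
      using D del_case[OF g t e False] by simp
    then show ?thesis using vm_del[OF vV] lsg_del[OF g] tr by blast
  next
    case True
    then obtain d1 where d1: "\<forall>w. dl (vx e) w = (\<Sum>f\<in>T - {e}. d1 f * colV H f w)" by blast
    let ?Hn = "ns_compl (vx e) H"
    have gn: "looped_simple_graph ?Hn" by (rule lsg_ns[OF g])
    have tn: "transversal ?Hn T" using t by (simp add: transversal_ns)
    have eqn: "vm (T - {e}) (colV H) = vm (T - {e}) (colV ?Hn)"
    proof (rule vm_eqI)
      fix I assume I: "I \<subseteq> T - {e}"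
      have "lin (colV ?Hn) I = lin (\<lambda>f w. colV H f w + colV H f (vx e) * nb H (vx e) w) I"
      proof (rule lin_cong)
        fix f w assume f: "f \<in> I"
        then have "vx f \<noteq> vx e" using transversal_vx[OF t e] I by blast
        then show "colV ?Hn f w = colV H f w + colV H f (vx e) * nb H (vx e) w"
          by (rule colV_ns_other[OF g])
      qed
      also have "\<dots> = lin (colV H) I" by (rule rowop) simp
      finally show "lin (colV H) I = lin (colV ?Hn) I" by simp
    qed
    have nsn: "\<not> (\<exists>d. \<forall>w. dl (vx e) w = (\<Sum>f\<in>T - {e}. d f * colV ?Hn f w))"
    proof
      assume "\<exists>d. \<forall>w. dl (vx e) w = (\<Sum>f\<in>T - {e}. d f * colV ?Hn f w)"
      then obtain d2 where d2: "\<forall>w. dl (vx e) w = (\<Sum>f\<in>T - {e}. d2 f * colV ?Hn f w)" by blast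
      define s where "s w = (\<Sum>f\<in>T - {e}. d2 f * colV H f w)" for w
      have sn: "(\<Sum>f\<in>T - {e}. d2 f * colV ?Hn f w) = s w + s (vx e) * nb H (vx e) w" for w
      proof -
        have "(\<Sum>f\<in>T - {e}. d2 f * colV ?Hn f w) = (\<Sum>f\<in>T - {e}. d2 f * (colV H f w + colV H f (vx e) * nb H (vx e) w))"
        proof (rule sum.cong)
          fix f assume "f \<in> T - {e}"
          then have "vx f \<noteq> vx e" using transversal_vx[OF t e] by blast
          then show "d2 f * colV ?Hn f w = d2 f * (colV H f w + colV H f (vx e) * nb H (vx e) w)"
            by (simp add: colV_ns_other[OF g])
        qed simp
        also have "\<dots> = s w + s (vx e) * nb H (vx e) w"
          unfolding s_def by (simp add: distrib_left sum.distrib sum_distrib_right mult.assoc)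
        finally show ?thesis .
      qed
      have sv: "s (vx e) = 1" using d2[rule_format, of "vx e"] sn[of "vx e"] by (simp add: dl_def)
      have dd: "dl (vx e) w = s w + nb H (vx e) w" for w using d2[rule_format, of w] sn[of w] sv by simp
      have "\<forall>w. nb H (vx e) w = (\<Sum>f\<in>T - {e}. (d1 f + d2 f) * colV H f w)"
      proof
        fix w
        have "(\<Sum>f\<in>T - {e}. (d1 f + d2 f) * colV H f w) = dl (vx e) w + s w"
          using d1 unfolding s_def by (simp add: distrib_right sum.distrib)
        also have "\<dots> = nb H (vx e) w" unfolding dd by (simp add: add.assoc[symmetric])
        finally show "nb H (vx e) w = (\<Sum>f\<in>T - {e}. (d1 f + d2 f) * colV H f w)" by simp
      qed
      then show False by (rule isotropy[OF g t e d1])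
    qed
    let ?H' = "delete_vertex (vx e) ?Hn"
    have tr: "transversal ?H' (T - {e})" by (rule transversal_del[OF tn e])
    have "transverse_matroid ?H' (T - {e}) = vm (T - {e}) (colV ?H')" by (rule tm_vm[OF TW_of[OF tr]])
    then have "delete_matroid (transverse_matroid H T) {e} = transverse_matroid ?H' (T - {e})"
      using D eqn del_case[OF gn tn e nsn] by simp
    then show ?thesis using vm_ns_del[OF vV] lsg_del[OF gn] tr by blast
  qed
qed




lemma colV_Phi: "v \<in> verts H \<Longrightarrow> colV H (Phi v) w = dl v w"
  by (auto simp: colV_def dl_def)

lemma colV_Chi_Psi:
  assumes g: "looped_simple_graph H" and v: "v \<in> verts H"
  shows "colV H (Chi v) w = nb H v w + (if rel H v v then dl v w else 0)"
    "colV H (Psi v) w = nb H v w + (if rel H v v then 0 else dl v w)"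
proof -
  have sy: "rel H w v = rel H v w" using lsgD(4)[OF g] by blast
  have cl: "rel H v w \<Longrightarrow> w \<in> verts H" using lsgD(3)[OF g] by blast
  show "colV H (Chi v) w = nb H v w + (if rel H v v then dl v w else 0)"
  proof (cases "w = v")
    case True
    then show ?thesis using v by (simp add: colV_def adjmat_def nb_def neighbor_def dl_def)
  next
    case False
    show ?thesis
    proof (cases "w \<in> verts H")
      case True
      then show ?thesis using sy False by (simp add: colV_def adjmat_def nb_def neighbor_def dl_def)
    next
      case nw: False
      then have "\<not> rel H v w" using cl by blast
      then show ?thesis using nw False by (simp add: colV_def adjmat_def nb_def neighbor_def dl_def)
    qed
  qed
  show "colV H (Psi v) w = nb H v w + (if rel H v v then 0 else dl v w)"
  proof (cases "w = v")
    case True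
    then show ?thesis using v by (simp add: colV_def adjmat_def nb_def neighbor_def dl_def)
  next
    case False
    show ?thesis
    proof (cases "w \<in> verts H")
      case True
      then show ?thesis using sy False by (simp add: colV_def adjmat_def nb_def neighbor_def dl_def)
    next
      case nw: False
      then have "\<not> rel H v w" using cl by blast
      then show ?thesis using nw False by (simp add: colV_def adjmat_def nb_def neighbor_def dl_def)
    qed
  qed
qed

lemma colV_Chi_good:
  assumes g: "looped_simple_graph H" and v: "v \<in> verts H" and r: "rel H v v"
  shows "colV H (Chi v) w = nb H v w + dl v w"
  using colV_Chi_Psi(1)[OF g v, of w] r by simp

lemma colV_Psi_good:
  assumes g: "looped_simple_graph H" and v: "v \<in> verts H" and r: "\<not> rel H v v"
  shows "colV H (Psi v) w = nb H v w + dl v w"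
  using colV_Chi_Psi(2)[OF g v, of w] r by simp

lemma colV_Chi_bad:
  assumes g: "looped_simple_graph H" and v: "v \<in> verts H" and r: "\<not> rel H v v"
  shows "colV H (Chi v) w = nb H v w"
  using colV_Chi_Psi(1)[OF g v, of w] r by simp

lemma colV_Psi_bad:
  assumes g: "looped_simple_graph H" and v: "v \<in> verts H" and r: "rel H v v"
  shows "colV H (Psi v) w = nb H v w"
  using colV_Chi_Psi(2)[OF g v, of w] r by simp

lemma contract_key:
  fixes x :: "'a \<Rightarrow> bit"
  assumes fT: "finite T" and e: "e \<in> T" and ce: "\<And>w. colV H e w = x w" and xv: "x v = 1"
    and h: "\<And>f w. f \<in> T - {e} \<Longrightarrow> colV H'' f w = colV H f w + colV H f v * x w"
  shows "contract_matroid (vm T (colV H)) {e} = vm (T - {e}) (colV H'')"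
proof -
  have "colV H e v = 1" using ce xv by simp
  then have "contract_matroid (vm T (colV H)) {e} = vm (T - {e}) (\<lambda>f w. colV H f w + colV H f v * colV H e w)"
    by (rule contract_single[OF fT e])
  also have "\<dots> = vm (T - {e}) (colV H'')"
    by (rule vm_cong) (simp add: h ce fun_eq_iff)
  finally show ?thesis .
qed

lemma contract_good:
  assumes g: "looped_simple_graph H" and t: "transversal H T" and e: "e \<in> T"
    and good: "e = Phi (vx e) \<or> (e = Chi (vx e) \<and> rel H (vx e) (vx e)) \<or> (e = Psi (vx e) \<and> \<not> rel H (vx e) (vx e))"
  shows "\<exists>H'. vertex_minor H H' \<and> looped_simple_graph H' \<and> transversal H' (T - {e}) \<and>
     contract_matroid (transverse_matroid H T) {e} = transverse_matroid H' (T - {e})"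
proof -
  define v where "v = vx e"
  have TW: "T \<subseteq> W H" by (rule TW_of[OF t])
  have fT: "finite T" by (rule finT[OF g t])
  have vV: "v \<in> verts H" unfolding v_def by (rule vxV[OF t e])
  have tmH: "transverse_matroid H T = vm T (colV H)" by (rule tm_vm[OF TW])
  have fo: "vx f \<noteq> v" if "f \<in> T - {e}" for f using transversal_vx[OF t e that] unfolding v_def by blast
  show ?thesis
  proof (cases "e = Phi v")
    case True
    let ?H' = "delete_vertex v H"
    have tr: "transversal ?H' (T - {e})" using transversal_del[OF t e] unfolding v_def .
    have "contract_matroid (vm T (colV H)) {e} = vm (T - {e}) (colV ?H')"
    proof (rule contract_key[OF fT e, of H "dl v"])
      show "\<And>w. colV H e w = dl v w" using True colV_Phi[OF vV] by simp
      show "dl v v = 1" by (simp add: dl_def)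
      fix f w assume "f \<in> T - {e}"
      then have "vx f \<noteq> v" by (rule fo)
      then show "colV ?H' f w = colV H f w + colV H f v * dl v w" by (simp add: colV_del dl_def)
    qed
    then have "contract_matroid (transverse_matroid H T) {e} = transverse_matroid ?H' (T - {e})"
      using tmH tm_vm[OF TW_of[OF tr]] by simp
    then show ?thesis using vm_del[OF vV] lsg_del[OF g] tr by blast
  next
    case False
    have ce: "colV H e w = nb H v w + dl v w" for w
    proof -
      have "(e = Chi v \<and> rel H v v) \<or> (e = Psi v \<and> \<not> rel H v v)" using good False unfolding v_def by blast
      then show ?thesis using colV_Chi_good[OF g vV] colV_Psi_good[OF g vV] by blast
    qed
    let ?Hn = "ns_compl v H"
    let ?H' = "delete_vertex v ?Hn"
    have tn: "transversal ?Hn T" using t by (simp add: transversal_ns)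
    have tr: "transversal ?H' (T - {e})" using transversal_del[OF tn e] unfolding v_def .
    have "contract_matroid (vm T (colV H)) {e} = vm (T - {e}) (colV ?H')"
    proof (rule contract_key[OF fT e, of H "\<lambda>w. nb H v w + dl v w"])
      show "\<And>w. colV H e w = nb H v w + dl v w" by (rule ce)
      show "nb H v v + dl v v = 1" by (simp add: dl_def)
      fix f w assume "f \<in> T - {e}"
      then have fv: "vx f \<noteq> v" by (rule fo)
      show "colV ?H' f w = colV H f w + colV H f v * (nb H v w + dl v w)"
      proof (cases "w = v")
        case True
        then show ?thesis using fv by (simp add: colV_del dl_def)
      next
        case False
        then show ?thesis using fv colV_ns_other[OF g fv, of w] by (simp add: colV_del dl_def)
      qed
    qed
    then have "contract_matroid (transverse_matroid H T) {e} = transverse_matroid ?H' (T - {e})"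
      using tmH tm_vm[OF TW_of[OF tr]] by simp
    then show ?thesis using vm_ns_del[OF vV] lsg_del[OF lsg_ns[OF g]] tr by blast
  qed
qed

lemma iso_tm_refl: "matroid_iso M M" unfolding matroid_iso_isof using isof_refl by blast

lemma contract_one:
  assumes g: "looped_simple_graph H" and t: "transversal H T" and e: "e \<in> T"
  shows "\<exists>H' T'. vertex_minor H H' \<and> looped_simple_graph H' \<and> transversal H' T' \<and>
     matroid_iso (contract_matroid (transverse_matroid H T) {e}) (transverse_matroid H' T')"
proof -
  define v where "v = vx e"
  have TW: "T \<subseteq> W H" by (rule TW_of[OF t])
  have fT: "finite T" by (rule finT[OF g t])
  have vV: "v \<in> verts H" unfolding v_def by (rule vxV[OF t e])
  have tmH: "transverse_matroid H T = vm T (colV H)" by (rule tm_vm[OF TW])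
  show ?thesis
  proof (cases "e = Phi v \<or> (e = Chi v \<and> rel H v v) \<or> (e = Psi v \<and> \<not> rel H v v)")
    case True
    then obtain H' where H': "vertex_minor H H'" "looped_simple_graph H'" "transversal H' (T - {e})"
      "contract_matroid (transverse_matroid H T) {e} = transverse_matroid H' (T - {e})"
      using contract_good[OF g t e] unfolding v_def by blast
    have "matroid_iso (contract_matroid (transverse_matroid H T) {e}) (transverse_matroid H' (T - {e}))"
      unfolding H'(4) by (rule iso_tm_refl)
    then show ?thesis using H'(1-3) by blast
  next
    case False
    have ev: "e = Phi v \<or> e = Chi v \<or> e = Psi v" unfolding v_def by (cases e) auto
    have bad: "(e = Chi v \<and> \<not> rel H v v) \<or> (e = Psi v \<and> rel H v v)" using False ev by blast
    have ce: "colV H e w = nb H v w" for w using bad colV_Chi_bad[OF g vV] colV_Psi_bad[OF g vV] by blast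
    show ?thesis
    proof (cases "\<exists>u. nb H v u = 1")
      case False
      then have z: "\<forall>w. colV H e w = 0" using ce by simp
      have "contract_matroid (transverse_matroid H T) {e} = delete_matroid (transverse_matroid H T) {e}"
        unfolding tmH contract_single0[of T e "colV H", OF fT e z] using delete_vm[of "{e}" T "colV H"] e by simp
      moreover obtain H' where H': "vertex_minor H H'" "looped_simple_graph H'" "transversal H' (T - {e})"
        "delete_matroid (transverse_matroid H T) {e} = transverse_matroid H' (T - {e})"
        using delete_one[OF g t e] by blast
      ultimately have "matroid_iso (contract_matroid (transverse_matroid H T) {e}) (transverse_matroid H' (T - {e}))"
        using iso_tm_refl by simp
      then show ?thesis using H'(1-3) by blast
    next
      case True
      then obtain u where u: "nb H v u = 1" by blast
      then have nvu: "neighbor H v u" by (simp add: nb_def split: if_splits)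
      then have uv: "u \<noteq> v" and ruv: "rel H v u" by (auto simp: neighbor_def)
      have uV: "u \<in> verts H" using lsgD(3)[OF g ruv] .
      have nuv: "neighbor H u v" using uv ruv lsgD(4)[OF g, of v u] by (simp add: neighbor_def)
      let ?Hu = "ns_compl u H"
      let ?s = "sg H u"
      have gu: "looped_simple_graph ?Hu" by (rule lsg_ns[OF g])
      have tu: "transversal ?Hu (?s ` T)" by (rule transversal_sg[OF t])
      have se: "?s e = e" using uv unfolding v_def by (simp add: sg_other)
      have e': "e \<in> ?s ` T" using e se by (metis image_eqI)
      have rvv: "rel ?Hu v v = (\<not> rel H v v)" using nuv by (simp add: rel_ns)
      have vxe: "vx e = v" unfolding v_def ..
      have good': "e = Phi (vx e) \<or> (e = Chi (vx e) \<and> rel ?Hu (vx e) (vx e)) \<or> (e = Psi (vx e) \<and> \<not> rel ?Hu (vx e) (vx e))"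
        using bad rvv unfolding vxe by blast
      obtain H' where H': "vertex_minor ?Hu H'" "looped_simple_graph H'" "transversal H' (?s ` T - {e})"
        "contract_matroid (transverse_matroid ?Hu (?s ` T)) {e} = transverse_matroid H' (?s ` T - {e})"
        using contract_good[OF gu tu e' good'] by blast
      have iso1: "isof ?s (vm T (colV H)) (vm (?s ` T) (colV ?Hu))" by (rule isof_ns[OF g])
      have "isof ?s (contract_matroid (vm T (colV H)) {e}) (contract_matroid (vm (?s ` T) (colV ?Hu)) (?s ` {e}))"
        by (rule isof_contract[OF iso1]) (simp add: e)
      moreover have "?s ` {e} = {e}" using se by simp
      moreover have "transverse_matroid ?Hu (?s ` T) = vm (?s ` T) (colV ?Hu)" by (rule tm_vm[OF TW_of[OF tu]])
      ultimately have "isof ?s (contract_matroid (transverse_matroid H T) {e}) (transverse_matroid H' (?s ` T - {e}))"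
        using H'(4) tmH by simp
      then have "matroid_iso (contract_matroid (transverse_matroid H T) {e}) (transverse_matroid H' (?s ` T - {e}))"
        unfolding matroid_iso_isof by blast
      moreover have "vertex_minor H H'" using vertex_minor_trans[OF H'(1) vm_ns[OF uV]] .
      ultimately show ?thesis using H'(2,3) by blast
    qed
  qed
qed




lemma delete_set:
  assumes fD: "finite D"
  shows "looped_simple_graph H \<Longrightarrow> transversal H T \<Longrightarrow> D \<subseteq> T \<Longrightarrow>
    \<exists>H'. vertex_minor H H' \<and> looped_simple_graph H' \<and> transversal H' (T - D) \<and>
      delete_matroid (transverse_matroid H T) D = transverse_matroid H' (T - D)"
  using fD
proof (induction D arbitrary: H T rule: finite_induct)
  case empty
  have "delete_matroid (transverse_matroid H T) {} = transverse_matroid H T"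
    using tm_vm[OF TW_of[OF empty(2)]] delete_vm[of "{}" T "colV H"] by simp
  then show ?case using empty(1,2) vertex_minor.refl[of H] by (intro exI[of _ H]) simp
next
  case (insert d D)
  have dT: "d \<in> T" using insert by blast
  obtain H1 where H1: "vertex_minor H H1" "looped_simple_graph H1" "transversal H1 (T - {d})"
    "delete_matroid (transverse_matroid H T) {d} = transverse_matroid H1 (T - {d})"
    using delete_one[OF insert(4,5) dT] by blast
  have DT: "D \<subseteq> T - {d}" using insert by blast
  obtain H2 where H2: "vertex_minor H1 H2" "looped_simple_graph H2" "transversal H2 (T - {d} - D)"
    "delete_matroid (transverse_matroid H1 (T - {d})) D = transverse_matroid H2 (T - {d} - D)"
    using insert(3)[OF H1(2,3) DT] by blast
  have TW: "T \<subseteq> W H" by (rule TW_of[OF insert(5)])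
  have e1: "T - {d} - D = T - insert d D" by blast
  have "delete_matroid (transverse_matroid H T) (insert d D) = vm (T - insert d D) (colV H)"
    unfolding tm_vm[OF TW] using insert(6) by (rule delete_vm)
  also have "\<dots> = delete_matroid (vm (T - {d}) (colV H)) D" using delete_vm[OF DT, of "colV H"] e1 by simp
  also have "vm (T - {d}) (colV H) = delete_matroid (transverse_matroid H T) {d}"
    unfolding tm_vm[OF TW] using delete_vm[of "{d}" T "colV H"] dT by simp
  finally have "delete_matroid (transverse_matroid H T) (insert d D) = transverse_matroid H2 (T - insert d D)"
    using H1(4) H2(4) e1 by simp
  then show ?case using vertex_minor_trans[OF H2(1) H1(1)] H2(2,3) e1 by (intro exI[of _ H2]) simp
qed

lemma contract_set:
  "\<And>H T C. looped_simple_graph H \<Longrightarrow> transversal H T \<Longrightarrow> C \<subseteq> T \<Longrightarrow> card C = n \<Longrightarrow>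
    \<exists>H' T'. vertex_minor H H' \<and> looped_simple_graph H' \<and> transversal H' T' \<and>
      matroid_iso (contract_matroid (transverse_matroid H T) C) (transverse_matroid H' T')"
proof (induction n)
  case 0
  have fT: "finite T" by (rule finT[OF 0(1,2)])
  then have "C = {}" using 0 by (meson card_0_eq finite_subset)
  have "contract_matroid (vm T (colV H)) {} = vm T (colV H)"
    using contract_vm[OF fT, of "{}" "colV H"] by (simp add: vm_alt)
  then have "contract_matroid (transverse_matroid H T) C = transverse_matroid H T"
    using tm_vm[OF TW_of[OF 0(2)]] \<open>C = {}\<close> by simp
  then show ?case using 0(1,2) vertex_minor.refl[of H] iso_tm_refl[of "transverse_matroid H T"] by (intro exI[of _ H] exI[of _ T]) simp
next
  case (Suc n)
  have fT: "finite T" by (rule finT[OF Suc(2,3)])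
  have fC: "finite C" using finite_subset[OF Suc(4) fT] .
  have "C \<noteq> {}" using Suc(5) by auto
  then obtain c where c: "c \<in> C" by blast
  define C' where "C' = C - {c}"
  have CC: "C = insert c C'" and nc: "c \<notin> C'" using c unfolding C'_def by auto
  have cardC': "card C' = n" using Suc(5) c fC unfolding C'_def by simp
  have cT: "c \<in> T" using c Suc(4) by blast
  have TW: "T \<subseteq> W H" by (rule TW_of[OF Suc(3)])
  have split: "contract_matroid (transverse_matroid H T) C = contract_matroid (contract_matroid (transverse_matroid H T) {c}) C'"
    unfolding tm_vm[OF TW] CC by (rule contract_split[OF fT _ nc]) (use Suc(4) CC in blast)
  obtain H1 T1 where H1: "vertex_minor H H1" "looped_simple_graph H1" "transversal H1 T1"
    "matroid_iso (contract_matroid (transverse_matroid H T) {c}) (transverse_matroid H1 T1)"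
    using contract_one[OF Suc(2,3) cT] by blast
  obtain f where f: "isof f (contract_matroid (transverse_matroid H T) {c}) (transverse_matroid H1 T1)"
    using H1(4) unfolding matroid_iso_isof by blast
  have C'g: "C' \<subseteq> ground (contract_matroid (transverse_matroid H T) {c})"
    using Suc(4) CC nc by auto
  have iso2: "isof f (contract_matroid (contract_matroid (transverse_matroid H T) {c}) C') (contract_matroid (transverse_matroid H1 T1) (f ` C'))"
    by (rule isof_contract[OF f C'g])
  have bij: "bij_betw f (T - {c}) T1" using f unfolding isof_def by simp
  have fC'T1: "f ` C' \<subseteq> T1" using bij C'g unfolding bij_betw_def by auto
  have "card (f ` C') = n"
  proof -
    have "inj_on f C'" using bij C'g unfolding bij_betw_def by (auto intro: inj_on_subset)
    then show ?thesis using cardC' by (simp add: card_image)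
  qed
  then obtain H2 T2 where H2: "vertex_minor H1 H2" "looped_simple_graph H2" "transversal H2 T2"
    "matroid_iso (contract_matroid (transverse_matroid H1 T1) (f ` C')) (transverse_matroid H2 T2)"
    using Suc.IH[OF H1(2,3) fC'T1] by blast
  obtain g where g: "isof g (contract_matroid (transverse_matroid H1 T1) (f ` C')) (transverse_matroid H2 T2)"
    using H2(4) unfolding matroid_iso_isof by blast
  have "isof (g \<circ> f) (contract_matroid (transverse_matroid H T) C) (transverse_matroid H2 T2)"
    unfolding split by (rule isof_trans[OF iso2 g])
  then have "matroid_iso (contract_matroid (transverse_matroid H T) C) (transverse_matroid H2 T2)"
    unfolding matroid_iso_isof by blast
  then show ?case using vertex_minor_trans[OF H2(1) H1(1)] H2(2,3) by blast
qed

lemma minor_main: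
  assumes "matroid_minor M N"
  shows "M = transverse_matroid G T \<Longrightarrow> looped_simple_graph G \<Longrightarrow> transversal G T \<Longrightarrow>
    \<exists>H T'. vertex_minor G H \<and> looped_simple_graph H \<and> transversal H T' \<and> matroid_iso N (transverse_matroid H T')"
  using assms
proof (induction rule: matroid_minor.induct)
  case (refl M)
  then show ?case using vertex_minor.refl[of G] iso_tm_refl[of "transverse_matroid G T"] by (intro exI[of _ G] exI[of _ T]) simp
next
  case (del M N D)
  obtain H T' where H: "vertex_minor G H" "looped_simple_graph H" "transversal H T'" "matroid_iso N (transverse_matroid H T')"
    using del by blast
  obtain f where f: "isof f N (transverse_matroid H T')" using H(4) unfolding matroid_iso_isof by blast
  have iso: "isof f (delete_matroid N D) (delete_matroid (transverse_matroid H T') (f ` D))"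
    by (rule isof_delete[OF f del(2)])
  have fD: "f ` D \<subseteq> T'" using f del(2) unfolding isof_def bij_betw_def by auto
  have finD: "finite (f ` D)" using finite_subset[OF fD finT[OF H(2,3)]] .
  obtain H2 where H2: "vertex_minor H H2" "looped_simple_graph H2" "transversal H2 (T' - f ` D)"
    "delete_matroid (transverse_matroid H T') (f ` D) = transverse_matroid H2 (T' - f ` D)"
    using delete_set[OF finD H(2,3) fD] by blast
  have "matroid_iso (delete_matroid N D) (transverse_matroid H2 (T' - f ` D))"
    using iso H2(4) unfolding matroid_iso_isof by auto
  then show ?case using vertex_minor_trans[OF H2(1) H(1)] H2(2,3) by blast
next
  case (con M N C)
  obtain H T' where H: "vertex_minor G H" "looped_simple_graph H" "transversal H T'" "matroid_iso N (transverse_matroid H T')"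
    using con by blast
  obtain f where f: "isof f N (transverse_matroid H T')" using H(4) unfolding matroid_iso_isof by blast
  have iso: "isof f (contract_matroid N C) (contract_matroid (transverse_matroid H T') (f ` C))"
    by (rule isof_contract[OF f con(2)])
  have fC: "f ` C \<subseteq> T'" using f con(2) unfolding isof_def bij_betw_def by auto
  obtain H2 T2 where H2: "vertex_minor H H2" "looped_simple_graph H2" "transversal H2 T2"
    "matroid_iso (contract_matroid (transverse_matroid H T') (f ` C)) (transverse_matroid H2 T2)"
    using contract_set[OF H(2,3) fC HOL.refl] by blast
  obtain g where g: "isof g (contract_matroid (transverse_matroid H T') (f ` C)) (transverse_matroid H2 T2)"
    using H2(4) unfolding matroid_iso_isof by blast
  have "matroid_iso (contract_matroid N C) (transverse_matroid H2 T2)"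
    using isof_trans[OF iso g] unfolding matroid_iso_isof by blast
  then show ?case using vertex_minor_trans[OF H2(1) H(1)] H2(2,3) by blast
qed

theorem proposition8p4:
  fixes G :: "'a lgraph" and T :: "'a welt set" and N :: "'a welt matroid"
  assumes "looped_simple_graph G"
    and "transversal G T"
    and "matroid_minor (transverse_matroid G T) N"
  shows "\<exists>H T'. vertex_minor G H \<and> transversal H T' \<and> matroid_iso N (transverse_matroid H T')"
  using minor_main[OF assms(3) HOL.refl assms(1,2)] by blast


end
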